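(* $\mathfrak{F}'\subseteq\mathcal{P}$, i.e. every connected graph with the extended distinguished edge property has property GNRP.
   Context: Graphs are finite, simple and undirected. $\mathbb{T}=\{z\in\mathbb{C}:|z|=1\}$, $\mathbb{I}=[0,2\pi)$. A $\mathbb{T}$-gain on $G$ is a map $\varphi$ from oriented edges to $\mathbb{T}$ with $\varphi(\overrightarrow{e_{ts}})=\varphi(\overrightarrow{e_{st}})^{-1}$; $A(\Phi)$ for $\Phi=(G,\varphi)$ is the Hermitian matrix with $(s,t)$ entry $\varphi(\overrightarrow{e_{st}})$ if $v_s\sim v_t$, else $0$; $\mathcal{T}_G$ is the set of all $\mathbb{T}$-gain graphs on $G$. $\Re(A)\ge0$ means the real part of every entry of $A$ is nonnegative. The gain of a directed cycle is the product of gains of its oriented edges. A rooted spanning tree $T$ with root $v_r$ induces the tree order ($v_x\le v_y$ iff $v_x$ is on the $T$-path from $v_r$ to $v_y$); $T$ is normal if adjacent vertices of $G$ are always comparable. The suitably oriented graph $\overrightarrow{G_T}$ orients each edge $e_{st}$ with $v_s\le v_t$ as $\overrightarrow{e_{st}}$ if $e_{st}\in E(T)$ and as $\overrightarrow{e_{ts}}$ otherwise; the $m-n+1$ fundamental cycles $C_j$ of $T$ become directed cycles $\overrightarrow{C_j(T)}$. For $r=(c_1,\dots,c_{m-n+1})\in\mathbb{I}^{m-n+1}$, $\mathcal{A}_T(r)=\{(G,\varphi)\in\mathcal{T}_G:\varphi(\overrightarrow{C_j(T)})=e^{ic_j}\ \forall j\}$. $G$ has GNRP (w.r.t. normal spanning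 tree $T$) if for each $r$ there is $\Phi\in\mathcal{A}_T(r)$ with $\Re(A(\Phi))\ge0$; $\mathcal{P}$ is the class of connected graphs with GNRP. The sum of subgraphs is the subgraph consisting of all edges in at least one of them. A fundamental subgraph of $G$ w.r.t. $T$ is the sum of a maximal collection of fundamental cycles whose sum intersects $T$ in a subtree. $K_4'$ denotes either $K_4$ or a subdivision of $K_4$ (a graph obtained from $K_4$ by repeatedly replacing an edge by a path of length two through a new vertex). A fundamental subgraph $\mathfrak{B}$ whose set $S$ of fundamental cycles contains three cycles $C_1',C_2',C_3'$ with $C_1'+C_2'+C_3'$ equal to a $K_4'$ is called $K_4'$-initiated; it equals $K_4'+C_1+\cdots+C_s$ where $C_1,\dots,C_s$ are the other cycles of $S$, and it has DEP if the $C_i$ can be ordered $C_{k_1},\dots,C_{k_s}$ so that $|E(C_{k_i})\setminus E(C_{k_0}+C_{k_1}+\cdots+C_{k_{i-1}})|>1$ for $i=1,\dots,s$, where $C_{k_0}=K_4'$. A non-$K_4'$-initiated fundamental subgraph built from cycles $C_1,\dots,C_s$ has DEP if they can be ordered $C_{k_1},\dots,C_{k_s}$ with $|E(C_{k_i})\setminus E(C_{k_1}+\cdots+C_{k_{i-1}})|>1$ for $i=2,\dots,s$. A connected graph has the extended distinguished edge property (EDEP) if all its $K_4'$-initiated and non-$K_4'$-initiated fundamental subgraphs with respect to a normal spanning tree $T$ have DEP (in the respective sense). $\mathfrak{F}'$ is the collection of connected graphs with EDEP. *)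

theory Defs
  imports Complex_Main
begin

definition simple_graph :: "'a set \<Rightarrow> 'a set set \<Rightarrow> bool" where
  "simple_graph V E \<longleftrightarrow> finite V \<and> (\<forall>e\<in>E. \<exists>x y. e = {x, y} \<and> x \<noteq> y \<and> x \<in> V \<and> y \<in> V)"

definition is_path :: "'a set set \<Rightarrow> 'a list \<Rightarrow> bool" where
  "is_path F p \<longleftrightarrow> p \<noteq> [] \<and> distinct p \<and> (\<forall>i. Suc i < length p \<longrightarrow> {p ! i, p ! Suc i} \<in> F)"

definition path_edges :: "'a list \<Rightarrow> 'a set set" where
  "path_edges p = {{p ! i, p ! Suc i} | i. Suc i < length p}"

definition connected_graph :: "'a set \<Rightarrow> 'a set set \<Rightarrow> bool" where
  "connected_graph V E \<longleftrightarrow> V \<noteq> {} \<and>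
     (\<forall>x\<in>V. \<forall>y\<in>V. \<exists>p. is_path E p \<and> hd p = x \<and> last p = y)"

definition has_cycle :: "'a set set \<Rightarrow> bool" where
  "has_cycle F \<longleftrightarrow> (\<exists>p. is_path F p \<and> length p \<ge> 3 \<and> {last p, hd p} \<in> F)"

definition is_tree_edges :: "'a set set \<Rightarrow> bool" where
  "is_tree_edges F \<longleftrightarrow> \<not> has_cycle F \<and>
     (\<forall>x\<in>\<Union>F. \<forall>y\<in>\<Union>F. \<exists>p. is_path F p \<and> hd p = x \<and> last p = y)"

definition spanning_tree :: "'a set \<Rightarrow> 'a set set \<Rightarrow> 'a set set \<Rightarrow> bool" where
  "spanning_tree V E T \<longleftrightarrow> T \<subseteq> E \<and> connected_graph V T \<and> \<not> has_cycle T"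

definition tree_le :: "'a set set \<Rightarrow> 'a \<Rightarrow> 'a \<Rightarrow> 'a \<Rightarrow> bool" where
  "tree_le T r x y \<longleftrightarrow> (\<exists>p. is_path T p \<and> hd p = r \<and> last p = y \<and> x \<in> set p)"

definition normal_spanning_tree :: "'a set \<Rightarrow> 'a set set \<Rightarrow> 'a set set \<Rightarrow> 'a \<Rightarrow> bool" where
  "normal_spanning_tree V E T r \<longleftrightarrow> spanning_tree V E T \<and> r \<in> V \<and>
     (\<forall>x y. {x, y} \<in> E \<longrightarrow> tree_le T r x y \<or> tree_le T r y x)"

text \<open>The T-path between x and y (unique in a tree).\<close>
definition tpath :: "'a set set \<Rightarrow> 'a \<Rightarrow> 'a \<Rightarrow> 'a list" where
  "tpath T x y = (THE p. is_path T p \<and> hd p = x \<and> last p = y)"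

definition fcycle :: "'a set set \<Rightarrow> 'a set \<Rightarrow> 'a set set" where
  "fcycle T e = (case (SOME (x, y). e = {x, y} \<and> x \<noteq> y) of (x, y) \<Rightarrow>
       insert e (path_edges (tpath T x y)))"

definition orient :: "'a set set \<Rightarrow> 'a \<Rightarrow> 'a set \<Rightarrow> 'a \<times> 'a" where
  "orient T r f = (case (SOME (s, t). f = {s, t} \<and> s \<noteq> t \<and> tree_le T r s t) of (s, t) \<Rightarrow>
       (if f \<in> T then (s, t) else (t, s)))"

text \<open>\<open>\<phi> s t\<close> is the gain of the oriented edge from s to t.\<close>
definition gain_fun :: "'a set set \<Rightarrow> ('a \<Rightarrow> 'a \<Rightarrow> complex) \<Rightarrow> bool" where
  "gain_fun E \<phi> \<longleftrightarrow> (\<forall>s t. {s, t} \<in> E \<longrightarrow> cmod (\<phi> s t) = 1 \<and> \<phi> t s = inverse (\<phi> s t))"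

text \<open>The Hermitian adjacency matrix A(\<Phi>), as a function of vertex pairs.\<close>
definition gain_adj :: "'a set set \<Rightarrow> ('a \<Rightarrow> 'a \<Rightarrow> complex) \<Rightarrow> 'a \<Rightarrow> 'a \<Rightarrow> complex" where
  "gain_adj E \<phi> s t = (if {s, t} \<in> E then \<phi> s t else 0)"

definition cycle_gain :: "'a set set \<Rightarrow> 'a \<Rightarrow> ('a \<Rightarrow> 'a \<Rightarrow> complex) \<Rightarrow> 'a set \<Rightarrow> complex" where
  "cycle_gain T r \<phi> e = (\<Prod>f\<in>fcycle T e. case orient T r f of (a, b) \<Rightarrow> \<phi> a b)"

text \<open>GNRP w.r.t. (T, r): for every prescription of angles c_e \<in> [0,2\<pi>) of the fundamental
  cycles (indexed by their non-tree edges) there is \<Phi> in \<open>A_T(c)\<close> with Re(A(\<Phi>)) \<ge> 0.\<close>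
definition GNRP :: "'a set \<Rightarrow> 'a set set \<Rightarrow> 'a set set \<Rightarrow> 'a \<Rightarrow> bool" where
  "GNRP V E T r \<longleftrightarrow>
     (\<forall>c :: 'a set \<Rightarrow> real. (\<forall>e\<in>E - T. c e \<in> {0..<2*pi}) \<longrightarrow>
        (\<exists>\<phi>. gain_fun E \<phi> \<and>
             (\<forall>e\<in>E - T. cycle_gain T r \<phi> e = exp (\<i> * complex_of_real (c e))) \<and>
             (\<forall>s\<in>V. \<forall>t\<in>V. 0 \<le> Re (gain_adj E \<phi> s t))))"

text \<open>Collections of fundamental cycles are given by their sets of non-tree edges.\<close>
definition cyc_sum :: "'a set set \<Rightarrow> 'a set set \<Rightarrow> 'a set set" where
  "cyc_sum T S = (\<Union>e\<in>S. fcycle T e)"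

definition admissible_coll :: "'a set set \<Rightarrow> 'a set set \<Rightarrow> 'a set set \<Rightarrow> bool" where
  "admissible_coll E T S \<longleftrightarrow> S \<subseteq> E - T \<and> is_tree_edges (cyc_sum T S \<inter> T)"

definition fundamental_coll :: "'a set set \<Rightarrow> 'a set set \<Rightarrow> 'a set set \<Rightarrow> bool" where
  "fundamental_coll E T S \<longleftrightarrow> admissible_coll E T S \<and>
     (\<forall>S'. admissible_coll E T S' \<and> S \<subseteq> S' \<longrightarrow> S' = S)"

inductive K4' :: "'a set set \<Rightarrow> bool" where
  base: "distinct [a, b, c, d] \<Longrightarrow> K4' {{a, b}, {a, c}, {a, d}, {b, c}, {b, d}, {c, d}}"
| subdiv: "K4' H \<Longrightarrow> {x, y} \<in> H \<Longrightarrow> z \<notin> \<Union>H \<Longrightarrow>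
             K4' ((H - {{x, y}}) \<union> {{x, z}, {z, y}})"

definition K4_initiated :: "'a set set \<Rightarrow> 'a set set \<Rightarrow> bool" where
  "K4_initiated T S \<longleftrightarrow> (\<exists>e1\<in>S. \<exists>e2\<in>S. \<exists>e3\<in>S. distinct [e1, e2, e3] \<and>
       K4' (fcycle T e1 \<union> fcycle T e2 \<union> fcycle T e3))"

definition DEP_K4 :: "'a set set \<Rightarrow> 'a set set \<Rightarrow> bool" where
  "DEP_K4 T S \<longleftrightarrow> (\<exists>e1\<in>S. \<exists>e2\<in>S. \<exists>e3\<in>S. distinct [e1, e2, e3] \<and>
       K4' (fcycle T e1 \<union> fcycle T e2 \<union> fcycle T e3) \<and>
       (\<exists>ks. distinct ks \<and> set ks = S - {e1, e2, e3} \<and>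
          (\<forall>i < length ks. card (fcycle T (ks ! i) -
             (fcycle T e1 \<union> fcycle T e2 \<union> fcycle T e3 \<union> cyc_sum T (set (take i ks)))) > 1)))"

definition DEP_plain :: "'a set set \<Rightarrow> 'a set set \<Rightarrow> bool" where
  "DEP_plain T S \<longleftrightarrow> (\<exists>ks. distinct ks \<and> set ks = S \<and>
       (\<forall>i. 1 \<le> i \<and> i < length ks \<longrightarrow>
          card (fcycle T (ks ! i) - cyc_sum T (set (take i ks))) > 1))"

definition EDEP :: "'a set set \<Rightarrow> 'a set set \<Rightarrow> bool" where
  "EDEP E T \<longleftrightarrow> (\<forall>S. fundamental_coll E T S \<longrightarrow>
       (K4_initiated T S \<longrightarrow> DEP_K4 T S) \<and> (\<not> K4_initiated T S \<longrightarrow> DEP_plain T S))"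

end

theory Submission
  imports Defs
begin


fun chain :: "'a set set \<Rightarrow> 'a list \<Rightarrow> bool" where
  "chain F (x # y # r) = ({x, y} \<in> F \<and> chain F (y # r))"
| "chain F _ = True"

lemma chain_nth: "chain F p \<longleftrightarrow> (\<forall>i. Suc i < length p \<longrightarrow> {p ! i, p ! Suc i} \<in> F)"
proof (induction F p rule: chain.induct)
  case (1 F x y r)
  show ?case
  proof
    assume "chain F (x # y # r)"
    then show "\<forall>i. Suc i < length (x # y # r) \<longrightarrow> {(x # y # r) ! i, (x # y # r) ! Suc i} \<in> F"
      using 1 by (auto simp: nth_Cons split: nat.splits)
  next
    assume h: "\<forall>i. Suc i < length (x # y # r) \<longrightarrow> {(x # y # r) ! i, (x # y # r) ! Suc i} \<in> F"
    have "{x,y} \<in> F" using h[rule_format, of 0] by simp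
    moreover have "\<forall>i. Suc i < length (y # r) \<longrightarrow> {(y # r) ! i, (y # r) ! Suc i} \<in> F"
      using h by (metis Suc_less_eq length_Cons nth_Cons_Suc)
    ultimately show "chain F (x # y # r)" using 1 by simp
  qed
qed auto

lemma is_path_chain: "is_path F p \<longleftrightarrow> p \<noteq> [] \<and> distinct p \<and> chain F p"
  by (simp add: is_path_def chain_nth)

lemma chain_append: "chain F (xs @ ys) \<longleftrightarrow> chain F xs \<and> chain F ys \<and> (xs \<noteq> [] \<and> ys \<noteq> [] \<longrightarrow> {last xs, hd ys} \<in> F)"
proof (induction xs rule: induct_list012)
  case (3 x y zs)
  then show ?case by auto
next
  case (2 x)
  then show ?case by (cases ys) auto
qed auto

lemma chain_Cons: "chain F (x # xs) \<longleftrightarrow> chain F xs \<and> (xs \<noteq> [] \<longrightarrow> {x, hd xs} \<in> F)"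
  by (cases xs) auto

lemma chain_rev: "chain F (rev p) \<longleftrightarrow> chain F p"
proof (induction p)
  case (Cons x xs)
  then show ?case by (auto simp: chain_append chain_Cons last_rev insert_commute)
qed auto

lemma chain_mono: "chain F p \<Longrightarrow> F \<subseteq> G \<Longrightarrow> chain G p"
  by (induction F p rule: chain.induct) auto

lemma is_path_mono: "is_path F p \<Longrightarrow> F \<subseteq> G \<Longrightarrow> is_path G p"
  by (auto simp: is_path_chain intro: chain_mono)

lemma has_cycle_mono: "has_cycle F \<Longrightarrow> F \<subseteq> G \<Longrightarrow> has_cycle G"
  unfolding has_cycle_def by (meson in_mono is_path_mono)

lemma distinct_hd_last: "distinct p \<Longrightarrow> p \<noteq> [] \<Longrightarrow> hd p = last p \<Longrightarrow> p = [hd p]"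
  by (cases p) (auto simp: last_in_set split: if_splits)

lemma path_unique_aux:
  assumes "\<not> has_cycle F"
  shows "length p + length q = n \<Longrightarrow> is_path F p \<Longrightarrow> is_path F q \<Longrightarrow> hd p = hd q \<Longrightarrow> last p = last q \<Longrightarrow> p = q"
proof (induction n arbitrary: p q rule: less_induct)
  case (less n)
  note P = less.prems
  show ?case
  proof (cases "\<exists>v \<in> set p \<inter> set q. v \<noteq> hd p \<and> v \<noteq> last p")
    case True
    then obtain v where v: "v \<in> set p" "v \<in> set q" "v \<noteq> hd p" "v \<noteq> last p" by blast
    obtain p1 p2 where pp: "p = p1 @ v # p2" using split_list[OF v(1)] by blast
    obtain q1 q2 where qq: "q = q1 @ v # q2" using split_list[OF v(2)] by blast
    have ne: "p1 \<noteq> []" "p2 \<noteq> []" "q1 \<noteq> []" "q2 \<noteq> []"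
      using v P(4,5) pp qq by auto
    have dp: "distinct p" "chain F p" "distinct q" "chain F q" using P(2,3) by (auto simp: is_path_chain)
    have a1: "is_path F (p1 @ [v])" "is_path F (q1 @ [v])"
      using dp pp qq by (auto simp: is_path_chain chain_append chain_Cons)
    have a2: "is_path F (v # p2)" "is_path F (v # q2)"
      using dp pp qq by (auto simp: is_path_chain chain_append)
    have "p1 @ [v] = q1 @ [v]"
      apply (rule less.IH[OF _ refl a1])
      using ne pp qq P(1,4) by auto
    moreover have "v # p2 = v # q2"
      apply (rule less.IH[OF _ refl a2])
      using ne pp qq P(1,5) by auto
    ultimately show ?thesis using pp qq by simp
  next
    case False
    have dp: "distinct p" "chain F p" "p \<noteq> []" "distinct q" "chain F q" "q \<noteq> []"
      using P(2,3) by (auto simp: is_path_chain)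
    show ?thesis
    proof (rule ccontr)
      assume neq: "p \<noteq> q"
      show False
      proof (cases "hd p = last p")
        case True
        then have "p = [hd p]" "q = [hd q]" using distinct_hd_last dp P(4,5) by metis+
        then show False using neq P(4) by metis
      next
        case xy: False
        obtain x p' where px: "p = x # p'" using dp by (cases p) auto
        obtain q' where qx: "q = x # q'" using dp P(4) px by (cases q) auto
        have "q' \<noteq> []" using qx P(5) px xy by auto
        then obtain q'' y where qy: "q' = q'' @ [y]" by (metis rev_exhaust)
        have ly: "last p = y" using P(5) qx qy by simp
        define c where "c = p @ rev q''"
        have dq: "distinct (x # q'' @ [y])" using dp qx qy by simp
        have disj: "set q'' \<inter> set p = {}"
        proof -
          { fix w assume w: "w \<in> set q''" "w \<in> set p"
            then have "w \<noteq> x" "w \<noteq> y" using dq by auto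
            then have False using False w qx qy px ly by auto }
          then show ?thesis by blast
        qed
        have cq: "chain F (x # q'' @ [y])" using dp qx qy by simp
        have cq0: "chain F (x # q'')" using cq chain_append[of F "x # q''" "[y]"] by simp
        have cq1: "chain F q''" using cq by (simp add: chain_append chain_Cons)
        have cq2: "q'' \<noteq> [] \<Longrightarrow> {last q'', y} \<in> F" using cq by (simp add: chain_append chain_Cons)
        have "has_cycle F"
          unfolding has_cycle_def
        proof (intro exI conjI)
          show "is_path F c"
            unfolding is_path_chain c_def
            using dp disj dq qx qy ly cq1 cq2 by (auto simp: chain_append chain_rev hd_rev insert_commute)
        next
          show "3 \<le> length c"
          proof (cases "q'' = []")
            case True
            then have "q = [x,y]" using qx qy by simp
            moreover have "p \<noteq> [x,y]" using neq calculation by simp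
            moreover have "length p \<ge> 2" using px ly xy by (cases p') auto
            ultimately have "length p \<ge> 3" using px ly by (cases p'; cases "tl p'") auto
            then show ?thesis by (simp add: c_def)
          next
            case False
            have "length p \<ge> 2" using px ly xy by (cases p') auto
            then show ?thesis using False by (cases q'') (auto simp add: c_def)
          qed
        next
          show "{last c, hd c} \<in> F"
          proof (cases "q'' = []")
            case True
            then show ?thesis using dp qx qy px ly by (simp add: c_def insert_commute)
          next
            case False
            from cq0 show ?thesis using False px by (simp add: c_def last_rev chain_Cons insert_commute)
          qed
        qed
        then show False using assms by simp
      qed
    qed
  qed
qed

lemma path_unique: "\<not> has_cycle F \<Longrightarrow> is_path F p \<Longrightarrow> is_path F q \<Longrightarrow> hd p = hd q \<Longrightarrow> last p = last q \<Longrightarrow> p = q"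
  using path_unique_aux by blast

lemma tpath_props:
  assumes "\<not> has_cycle F" "is_path F p" "hd p = x" "last p = y"
  shows "is_path F (tpath F x y) \<and> hd (tpath F x y) = x \<and> last (tpath F x y) = y"
proof -
  have "tpath F x y = p"
    unfolding tpath_def
    by (rule the_equality) (use assms path_unique in auto)
  then show ?thesis using assms by simp
qed

definition reach :: "'a set set \<Rightarrow> 'a \<Rightarrow> 'a \<Rightarrow> bool" where
  "reach F u v \<longleftrightarrow> (\<exists>w. chain F w \<and> w \<noteq> [] \<and> hd w = u \<and> last w = v)"

lemma reach_refl: "reach F u u"
  unfolding reach_def by (rule exI[of _ "[u]"]) simp

lemma reach_sym: "reach F u v \<Longrightarrow> reach F v u"
  unfolding reach_def by (metis chain_rev hd_rev last_rev rev_is_Nil_conv)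

lemma reach_trans: "reach F u v \<Longrightarrow> reach F v w \<Longrightarrow> reach F u w"
  unfolding reach_def
proof (elim exE conjE)
  fix w1 w2 assume h: "chain F w1" "w1 \<noteq> []" "hd w1 = u" "last w1 = v" "chain F w2" "w2 \<noteq> []" "hd w2 = v" "last w2 = w"
  show "\<exists>w'. chain F w' \<and> w' \<noteq> [] \<and> hd w' = u \<and> last w' = w"
  proof (cases "tl w2 = []")
    case True
    then show ?thesis using h by (metis last_ConsL list.collapse)
  next
    case False
    have "chain F (tl w2)" using h by (metis chain_Cons list.collapse)
    moreover have "{last w1, hd (tl w2)} \<in> F" using h False by (metis chain_Cons list.collapse)
    moreover have "last (tl w2) = last w2" using False by (cases w2) auto
    ultimately show ?thesis using h False
      by (intro exI[of _ "w1 @ tl w2"]) (auto simp: chain_append)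
  qed
qed

lemma reach_mono: "reach F u v \<Longrightarrow> F \<subseteq> G \<Longrightarrow> reach G u v"
  unfolding reach_def using chain_mono by blast

lemma chain_reach: "chain F w \<Longrightarrow> w \<noteq> [] \<Longrightarrow> u \<in> set w \<Longrightarrow> reach F (hd w) u"
proof (induction F w rule: chain.induct)
  case (1 F x y r)
  then show ?case
  proof (cases "u = x")
    case True
    then show ?thesis by (simp add: reach_refl)
  next
    case False
    then have "reach F y u" using 1 by simp
    moreover have "reach F x y" unfolding reach_def using 1(2)
      by (intro exI[of _ "[x,y]"]) simp
    ultimately show ?thesis using reach_trans by fastforce
  qed
qed (auto intro: reach_refl)

lemma walk_path_aux: "length w = n \<Longrightarrow> chain F w \<Longrightarrow> w \<noteq> [] \<Longrightarrow> \<exists>p. is_path F p \<and> hd p = hd w \<and> last p = last w \<and> set p \<subseteq> set w"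
proof (induction n arbitrary: w rule: less_induct)
  case (less n)
  show ?case
  proof (cases "distinct w")
    case True
    then show ?thesis using less.prems by (auto simp: is_path_chain)
  next
    case False
    then obtain xs y ys zs where w: "w = xs @ [y] @ ys @ [y] @ zs" using not_distinct_decomp by blast
    define w' where "w' = xs @ [y] @ zs"
    have c1: "chain F ((xs @ [y]) @ (ys @ [y] @ zs))" using less.prems(2) unfolding w by simp
    have c2: "chain F ((xs @ [y] @ ys) @ (y # zs))" using less.prems(2) unfolding w by simp
    have a: "chain F (xs @ [y])" using c1 chain_append by blast
    have b: "chain F (y # zs)" using c2 chain_append by blast
    have "chain F ((xs @ [y]) @ zs)" using a b by (auto simp: chain_append chain_Cons)
    then have "chain F w'" by (simp add: w'_def)
    moreover have "length w' < n" using less.prems w by (simp add: w'_def)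
    moreover have "hd w' = hd w" "last w' = last w" "set w' \<subseteq> set w" using w by (auto simp: w'_def hd_append)
    ultimately show ?thesis using less.IH[of "length w'" w'] by (auto simp: w'_def)
  qed
qed

lemma reach_path: "reach F u v \<Longrightarrow> \<exists>p. is_path F p \<and> hd p = u \<and> last p = v"
  unfolding reach_def using walk_path_aux by metis

lemma path_reach: "is_path F p \<Longrightarrow> reach F (hd p) (last p)"
  unfolding reach_def is_path_chain by blast


lemma path_edges_Nil[simp]: "path_edges [] = {}" and path_edges_single[simp]: "path_edges [x] = {}"
  by (auto simp: path_edges_def)

lemma path_edges_img: "path_edges p = (\<lambda>i. {p ! i, p ! Suc i}) ` {i. Suc i < length p}"
  by (auto simp: path_edges_def)

lemma path_edges_Cons2[simp]: "path_edges (x # y # r) = insert {x, y} (path_edges (y # r))"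
proof -
  have a: "{i. Suc i < length (x # y # r)} = insert 0 (Suc ` {i. Suc i < length (y # r)})"
    by (auto simp: image_iff) (metis Suc_less_eq not0_implies_Suc)
  show ?thesis unfolding path_edges_img a image_insert image_image by simp
qed

lemma chain_path_edges: "chain F p \<Longrightarrow> path_edges p \<subseteq> F"
  by (induction F p rule: chain.induct) auto

lemma chain_own: "chain (path_edges p) p"
  by (simp add: chain_nth path_edges_def) blast

lemma path_edges_sub: "f \<in> path_edges p \<Longrightarrow> f \<subseteq> set p"
  by (induction p rule: induct_list012) auto

lemma path_edges_ne: assumes "length p \<ge> 2" shows "path_edges p \<noteq> {}"
proof -
  have "Suc 0 < length p" using assms by simp
  then have "{p!0, p!Suc 0} \<in> path_edges p" unfolding path_edges_def by blast
  then show ?thesis by blast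
qed

lemma finite_path_edges: "finite (path_edges p)"
  by (induction p rule: induct_list012) auto

lemma path_edges_vert: "\<Union>(path_edges p) \<subseteq> set p"
  using path_edges_sub by blast

lemma set_path_edges_vert: "length p \<ge> 2 \<Longrightarrow> set p \<subseteq> \<Union>(path_edges p)"
proof (induction p rule: induct_list012)
  case (3 x y zs)
  then show ?case by (cases zs) auto
qed auto

lemma deg_path_edges:
  assumes d: "distinct p" and l: "length p \<ge> 2" and k: "k < length p"
  shows "card {f \<in> path_edges p. p ! k \<in> f} = (if k = 0 \<or> k = length p - 1 then 1 else 2)"
proof -
  define g where "g i = {p ! i, p ! Suc i}" for i
  have pe: "path_edges p = g ` {i. Suc i < length p}" by (auto simp: path_edges_def g_def)
  have mem: "p ! k \<in> g i \<longleftrightarrow> i = k \<or> Suc i = k" if "Suc i < length p" for i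
    using that d k by (auto simp: g_def nth_eq_iff_index_eq)
  have inj: "inj_on g {i. Suc i < length p}"
  proof (rule inj_onI)
    fix i j assume h: "i \<in> {i. Suc i < length p}" "j \<in> {i. Suc i < length p}" "g i = g j"
    then have "p ! i = p ! j \<or> (p ! i = p ! Suc j \<and> p ! Suc i = p ! j)"
      by (auto simp: g_def doubleton_eq_iff)
    then show "i = j" using h d by (auto simp: nth_eq_iff_index_eq)
  qed
  have "{f \<in> path_edges p. p ! k \<in> f} = g ` {i. Suc i < length p \<and> (i = k \<or> Suc i = k)}"
    using mem by (auto simp: pe)
  then have "card {f \<in> path_edges p. p ! k \<in> f} = card {i. Suc i < length p \<and> (i = k \<or> Suc i = k)}"
    by (metis (no_types, lifting) card_image inj inj_on_subset mem_Collect_eq subsetI)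
  also have "\<dots> = (if k = 0 \<or> k = length p - 1 then 1 else 2)"
  proof -
    consider "k = 0" | "k = length p - 1" | "0 < k \<and> k < length p - 1" using k by linarith
    then show ?thesis
    proof cases
      case 1
      then have "{i. Suc i < length p \<and> (i = k \<or> Suc i = k)} = {0}" using l by auto
      then show ?thesis using 1 by simp
    next
      case 2
      then have "{i. Suc i < length p \<and> (i = k \<or> Suc i = k)} = {k - 1}" using l by auto
      then show ?thesis using 2 by simp
    next
      case 3
      then have "{i. Suc i < length p \<and> (i = k \<or> Suc i = k)} = {k, k - 1}" using l by auto
      moreover have "k \<noteq> k - 1" using 3 by (cases k) auto
      ultimately show ?thesis using 3 by simp
    qed
  qed
  finally show ?thesis .
qed

lemma deg_cycle:
  assumes d: "distinct p" and l: "length p \<ge> 2" and e: "e = {hd p, last p}" and ne: "e \<notin> path_edges p"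
  shows "card {f \<in> insert e (path_edges p). v \<in> f} \<in> {0, 2}"
proof (cases "v \<in> set p")
  case False
  then have "{f \<in> insert e (path_edges p). v \<in> f} = {}"
  proof -
    have pn: "p \<noteq> []" using l by auto
    { fix f assume f: "f \<in> insert e (path_edges p)" "v \<in> f"
      have "f \<subseteq> set p" using f path_edges_sub[of f p] e pn by (auto simp: hd_in_set last_in_set)
      then have False using f False by blast }
    then show ?thesis by blast
  qed
  then show ?thesis by (simp only: card.empty) simp
next
  case True
  then obtain k where k: "k < length p" "v = p ! k" by (metis in_set_conv_nth)
  have hd: "hd p = p ! 0" and lst: "last p = p ! (length p - 1)" using l by (cases p; simp add: hd_conv_nth last_conv_nth)+
  have ve: "v \<in> e \<longleftrightarrow> k = 0 \<or> k = length p - 1"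
  proof -
    have "0 < length p" "length p - 1 < length p" using l by auto
    then show ?thesis using d k l by (auto simp: e hd lst nth_eq_iff_index_eq)
  qed
  have fin: "finite {f \<in> path_edges p. v \<in> f}" using finite_path_edges[of p] by simp
  show ?thesis
  proof (cases "v \<in> e")
    case True
    then have "{f \<in> insert e (path_edges p). v \<in> f} = insert e {f \<in> path_edges p. v \<in> f}" by auto
    then have "card {f \<in> insert e (path_edges p). v \<in> f} = Suc (card {f \<in> path_edges p. v \<in> f})"
      using fin ne by simp
    then show ?thesis using deg_path_edges[OF d l k(1)] ve True k by simp
  next
    case False
    then have "{f \<in> insert e (path_edges p). v \<in> f} = {f \<in> path_edges p. v \<in> f}" by auto
    then show ?thesis using deg_path_edges[OF d l k(1)] ve False k by simp
  qed
qed


locale gr =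
  fixes V :: "'a set" and E :: "'a set set" and T :: "'a set set" and r :: 'a
  assumes sg: "simple_graph V E" and nst: "normal_spanning_tree V E T r"
begin

lemma finV: "finite V" using sg by (simp add: simple_graph_def)

lemma edge_form: "e \<in> E \<Longrightarrow> \<exists>x y. e = {x, y} \<and> x \<noteq> y \<and> x \<in> V \<and> y \<in> V"
  using sg by (simp add: simple_graph_def)

lemma finE: "finite E"
proof -
  have "E \<subseteq> Pow V" using edge_form by blast
  then show ?thesis using finV by (meson finite_Pow_iff finite_subset)
qed

lemma TE: "T \<subseteq> E" and acyc: "\<not> has_cycle T" and conT: "connected_graph V T"
  using nst by (auto simp: normal_spanning_tree_def spanning_tree_def)

lemma normal: "{x, y} \<in> E \<Longrightarrow> tree_le T r x y \<or> tree_le T r y x"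
  using nst by (auto simp: normal_spanning_tree_def)

lemma fc_repr:
  assumes e: "e \<in> E - T"
  shows "\<exists>p. is_path T p \<and> length p \<ge> 2 \<and> e = {hd p, last p} \<and> fcycle T e = insert e (path_edges p)"
proof -
  define P where "P = (\<lambda>(x, y). e = {x, y} \<and> x \<noteq> y)"
  have ex: "\<exists>xy. P xy" using edge_form[of e] e by (auto simp: P_def)
  obtain x y where xy: "(SOME xy. P xy) = (x, y)" by (cases "SOME xy. P xy") auto
  have Pxy: "P (x, y)" using someI_ex[OF ex] xy by simp
  then have exy: "e = {x, y}" "x \<noteq> y" by (auto simp: P_def)
  have fc: "fcycle T e = insert e (path_edges (tpath T x y))"
    unfolding fcycle_def using xy unfolding P_def by simp
  have xyV: "x \<in> V" "y \<in> V" using edge_form[of e] e exy by auto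
  obtain p0 where "is_path T p0" "hd p0 = x" "last p0 = y"
    using conT xyV unfolding connected_graph_def by blast
  then have tp: "is_path T (tpath T x y)" "hd (tpath T x y) = x" "last (tpath T x y) = y"
    using tpath_props[OF acyc] by blast+
  have "length (tpath T x y) \<ge> 2"
  proof (rule ccontr)
    assume a: "\<not> ?thesis"
    have "tpath T x y \<noteq> []" using tp(1) by (simp add: is_path_def)
    then have "length (tpath T x y) \<noteq> 0" by simp
    then have "length (tpath T x y) = 1" using a by linarith
    then have "hd (tpath T x y) = last (tpath T x y)" by (cases "tpath T x y") auto
    then show False using tp exy by simp
  qed
  moreover have "e = {hd (tpath T x y), last (tpath T x y)}" using tp(2,3) exy(1) by simp
  ultimately show ?thesis using tp(1) fc by (intro exI[of _ "tpath T x y"] conjI)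
qed

context
  fixes e assumes e: "e \<in> E - T"
begin

lemma fc_facts:
  shows "fcycle T e \<subseteq> E" "finite (fcycle T e)" "e \<in> fcycle T e" "fcycle T e - {e} \<subseteq> T"
    "fcycle T e \<inter> T = fcycle T e - {e}" "card (fcycle T e) \<ge> 2"
    "\<And>v. card {f \<in> fcycle T e. v \<in> f} \<in> {0, 2}"
    "is_tree_edges (fcycle T e \<inter> T)" "fcycle T e \<inter> T \<noteq> {}"
proof -
  obtain p where p0: "is_path T p \<and> length p \<ge> 2 \<and> e = {hd p, last p} \<and> fcycle T e = insert e (path_edges p)"
    using fc_repr[OF e] by (rule exE)
  note p = conjunct1[OF p0] conjunct1[OF conjunct2[OF p0]] conjunct1[OF conjunct2[OF conjunct2[OF p0]]]
     conjunct2[OF conjunct2[OF conjunct2[OF p0]]]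
  have pT: "path_edges p \<subseteq> T" using p(1) chain_path_edges by (auto simp: is_path_chain)
  have eT: "e \<notin> T" using e by simp
  have enp: "e \<notin> path_edges p" using pT eT by auto
  have cT: "fcycle T e \<inter> T = path_edges p" unfolding p(4) using pT eT by auto
  have eE: "e \<in> E" using e by simp
  show "fcycle T e \<subseteq> E" unfolding p(4) using pT TE eE by auto
  show "finite (fcycle T e)" unfolding p(4) using finite_path_edges[of p] by simp
  show "e \<in> fcycle T e" unfolding p(4) by simp
  show "fcycle T e - {e} \<subseteq> T" unfolding p(4) using pT by auto
  show "fcycle T e \<inter> T = fcycle T e - {e}" unfolding p(4) using pT eT by auto
  have pne: "path_edges p \<noteq> {}" using path_edges_ne[OF p(2)] .
  then have "card (path_edges p) \<ge> 1" using finite_path_edges[of p]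
    by (simp add: Suc_le_eq card_gt_0_iff)
  then show "card (fcycle T e) \<ge> 2" using p(4) enp finite_path_edges[of p] by (simp add: card_insert_disjoint)
  have dp: "distinct p" using p(1) by (simp add: is_path_def)
  show "\<And>v. card {f \<in> fcycle T e. v \<in> f} \<in> {0, 2}"
    using deg_cycle[OF dp p(2) p(3) enp] p(4) by simp
  show "fcycle T e \<inter> T \<noteq> {}" using cT pne by simp
  show "is_tree_edges (fcycle T e \<inter> T)"
    unfolding cT is_tree_edges_def
  proof (intro conjI ballI)
    show "\<not> has_cycle (path_edges p)" using acyc has_cycle_mono[OF _ pT] by auto
  next
    fix u v assume uv: "u \<in> \<Union> (path_edges p)" "v \<in> \<Union> (path_edges p)"
    then have uv': "u \<in> set p" "v \<in> set p" using path_edges_vert[of p] by auto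
    have pn: "p \<noteq> []" using p(1) by (simp add: is_path_def)
    have r1: "reach (path_edges p) (hd p) u" by (rule chain_reach[OF chain_own pn uv'(1)])
    have r2: "reach (path_edges p) (hd p) v" by (rule chain_reach[OF chain_own pn uv'(2)])
    have "reach (path_edges p) u v" by (rule reach_trans[OF reach_sym[OF r1] r2])
    then show "\<exists>q. is_path (path_edges p) q \<and> hd q = u \<and> last q = v" by (rule reach_path)
  qed
qed

lemma fc_other: "e' \<in> E - T \<Longrightarrow> e' \<noteq> e \<Longrightarrow> e' \<notin> fcycle T e"
  using fc_facts(4) by auto

end

lemma tree_union:
  assumes A: "is_tree_edges A" and B: "is_tree_edges B" and AB: "A \<union> B \<subseteq> T"
    and z: "z \<in> \<Union>A" "z \<in> \<Union>B"
  shows "is_tree_edges (A \<union> B)"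
  unfolding is_tree_edges_def
proof (intro conjI ballI)
  show "\<not> has_cycle (A \<union> B)" using acyc has_cycle_mono[OF _ AB] by auto
next
  fix u v assume uv: "u \<in> \<Union>(A \<union> B)" "v \<in> \<Union>(A \<union> B)"
  have rz: "reach (A \<union> B) w z" if "w \<in> \<Union>(A \<union> B)" for w
  proof (cases "w \<in> \<Union>A")
    case True
    have "\<exists>q. is_path A q \<and> hd q = w \<and> last q = z" using A z True unfolding is_tree_edges_def by auto
    then obtain q where q: "is_path A q \<and> hd q = w \<and> last q = z" by (rule exE)
    then have "reach A w z" using path_reach[of A q] by simp
    then show ?thesis using reach_mono[of A w z "A \<union> B"] by simp
  next
    case False
    then have w: "w \<in> \<Union>B" using that by auto
    have "\<exists>q. is_path B q \<and> hd q = w \<and> last q = z" using B z w unfolding is_tree_edges_def by auto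
    then obtain q where q: "is_path B q \<and> hd q = w \<and> last q = z" by (rule exE)
    then have "reach B w z" using path_reach[of B q] by simp
    then show ?thesis using reach_mono[of B w z "A \<union> B"] by simp
  qed
  have "reach (A \<union> B) u v" by (rule reach_trans[OF rz[OF uv(1)] reach_sym[OF rz[OF uv(2)]]])
  then show "\<exists>p. is_path (A \<union> B) p \<and> hd p = u \<and> last p = v" by (rule reach_path)
qed

lemma cyc_sum_Un: "cyc_sum T (S1 \<union> S2) = cyc_sum T S1 \<union> cyc_sum T S2"
  by (simp add: cyc_sum_def)

lemma adm_union:
  assumes a1: "admissible_coll E T S1" and a2: "admissible_coll E T S2"
    and z1: "z \<in> \<Union>(cyc_sum T S1 \<inter> T)" and z2: "z \<in> \<Union>(cyc_sum T S2 \<inter> T)"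
  shows "admissible_coll E T (S1 \<union> S2)"
proof -
  have eq: "cyc_sum T (S1 \<union> S2) \<inter> T = (cyc_sum T S1 \<inter> T) \<union> (cyc_sum T S2 \<inter> T)"
    by (auto simp: cyc_sum_Un)
  have t1: "is_tree_edges (cyc_sum T S1 \<inter> T)" using a1 by (simp add: admissible_coll_def)
  have t2: "is_tree_edges (cyc_sum T S2 \<inter> T)" using a2 by (simp add: admissible_coll_def)
  have "is_tree_edges ((cyc_sum T S1 \<inter> T) \<union> (cyc_sum T S2 \<inter> T))"
    by (rule tree_union[OF t1 t2 _ z1 z2]) auto
  moreover have "S1 \<union> S2 \<subseteq> E - T" using a1 a2 by (simp add: admissible_coll_def)
  ultimately show ?thesis using eq by (simp add: admissible_coll_def)
qed

lemma cyc_single: "cyc_sum T {e} = fcycle T e" by (simp add: cyc_sum_def)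

lemma adm_single: "e \<in> E - T \<Longrightarrow> admissible_coll E T {e}"
  using fc_facts(8)[of e] by (simp add: admissible_coll_def cyc_single)

lemma fund_exists:
  assumes e: "e \<in> E - T"
  shows "\<exists>S. fundamental_coll E T S \<and> e \<in> S"
proof -
  define A where "A = {S. admissible_coll E T S \<and> e \<in> S}"
  have finA: "finite A" unfolding A_def admissible_coll_def
    by (rule finite_subset[of _ "Pow (E - T)"]) (use finE in auto)
  have eA: "{e} \<in> A" using adm_single[OF e] by (simp add: A_def)
  define m where "m = Max (card ` A)"
  have "m \<in> card ` A" unfolding m_def using finA eA by (intro Max_in) auto
  then obtain S where S: "S \<in> A" "card S = m" by auto
  have Smax: "card S' \<le> card S" if "S' \<in> A" for S'
  proof -
    have "card S' \<le> Max (card ` A)" using finA that by (intro Max_ge) auto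
    then show ?thesis using S(2) by (simp add: m_def)
  qed
  have finS: "finite S'" if "admissible_coll E T S'" for S'
  proof -
    have "S' \<subseteq> E" using that by (auto simp: admissible_coll_def)
    then show ?thesis using finE finite_subset by auto
  qed
  have "fundamental_coll E T S"
    unfolding fundamental_coll_def
  proof (intro conjI allI impI)
    show "admissible_coll E T S" using S by (simp add: A_def)
    fix S' assume h: "admissible_coll E T S' \<and> S \<subseteq> S'"
    then have "S' \<in> A" using S by (auto simp: A_def)
    then have c1: "card S' \<le> card S" using Smax by simp
    have fS': "finite S'" using finS h by simp
    have "card S \<le> card S'" using card_mono[OF fS'] h by simp
    then have "card S = card S'" using c1 by simp
    then have "S = S'" using card_subset_eq[OF fS', of S] h by simp
    then show "S' = S" by simp
  qed
  then show ?thesis using S by (auto simp: A_def)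
qed

lemma fund_sub: "fundamental_coll E T S \<Longrightarrow> S \<subseteq> E - T"
  by (simp add: fundamental_coll_def admissible_coll_def)

lemma fund_disj:
  assumes S1: "fundamental_coll E T S1" and S2: "fundamental_coll E T S2" and f: "f \<in> cyc_sum T S1" "f \<in> cyc_sum T S2"
  shows "S1 = S2"
proof -
  have a1: "admissible_coll E T S1" and a2: "admissible_coll E T S2" using S1 S2 by (auto simp: fundamental_coll_def)
  have key: "S1 = S2" if z: "z \<in> \<Union>(cyc_sum T S1 \<inter> T)" "z \<in> \<Union>(cyc_sum T S2 \<inter> T)" for z
  proof -
    have adm: "admissible_coll E T (S1 \<union> S2)" using adm_union[OF a1 a2 z] .
    have "S1 \<union> S2 = S1" using S1 adm unfolding fundamental_coll_def by auto
    moreover have "S1 \<union> S2 = S2" using S2 adm unfolding fundamental_coll_def by auto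
    ultimately show ?thesis by simp
  qed
  obtain e1 where e1: "e1 \<in> S1 \<and> f \<in> fcycle T e1" using f(1) unfolding cyc_sum_def by auto
  obtain e2 where e2: "e2 \<in> S2 \<and> f \<in> fcycle T e2" using f(2) unfolding cyc_sum_def by auto
  have e1': "e1 \<in> E - T" using e1 fund_sub[OF S1] by auto
  have e2': "e2 \<in> E - T" using e2 fund_sub[OF S2] by auto
  show ?thesis
  proof (cases "f \<in> T")
    case True
    have "f \<in> E" using TE True by auto
    then have "\<exists>x y. f = {x, y}" using edge_form[of f] by auto
    then obtain x where x: "x \<in> f" by auto
    have "x \<in> \<Union>(cyc_sum T S1 \<inter> T)" using True e1 x unfolding cyc_sum_def by auto
    moreover have "x \<in> \<Union>(cyc_sum T S2 \<inter> T)" using True e2 x unfolding cyc_sum_def by auto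
    ultimately show ?thesis using key by simp
  next
    case False
    have "f = e1" using e1 fc_facts(4)[OF e1'] False by auto
    moreover have "f = e2" using e2 fc_facts(4)[OF e2'] False by auto
    ultimately have e12: "e1 \<in> S2" using e2 by simp
    have "fcycle T e1 \<inter> T \<noteq> {}" using fc_facts(9)[OF e1'] .
    then obtain g where g: "g \<in> fcycle T e1 \<inter> T" by auto
    have "g \<in> E" using TE g by auto
    then have "\<exists>x y. g = {x, y}" using edge_form[of g] by auto
    then obtain x where x: "x \<in> g" by auto
    have "x \<in> \<Union>(cyc_sum T S1 \<inter> T)" using g e1 x unfolding cyc_sum_def by auto
    moreover have "x \<in> \<Union>(cyc_sum T S2 \<inter> T)" using g e12 x unfolding cyc_sum_def by auto
    ultimately show ?thesis using key by simp
  qed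
qed

end


definition md :: "real \<Rightarrow> real \<Rightarrow> bool" where
  "md x y \<longleftrightarrow> (\<exists>k::int. x = y + 2 * pi * of_int k)"

definition inI :: "real \<Rightarrow> bool" where
  "inI x \<longleftrightarrow> - (pi / 2) \<le> x \<and> x \<le> pi / 2"

lemma md_refl: "md x x" unfolding md_def by (rule exI[of _ 0]) simp

lemma md_shift: "md x y \<Longrightarrow> md (x + z) (y + z)"
  unfolding md_def by auto

lemma md_cong: "x = x' \<Longrightarrow> y = y' \<Longrightarrow> md x y \<Longrightarrow> md x' y'" by simp

lemma md_eq_shift: "x = y + 2 * pi * of_int k \<Longrightarrow> md x y" unfolding md_def by blast

lemma md_trans: "md x y \<Longrightarrow> md y z \<Longrightarrow> md x z"
proof -
  assume "md x y" "md y z"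
  then obtain k l :: int where "x = y + 2 * pi * k" "y = z + 2 * pi * l" unfolding md_def by blast
  then have "x = z + 2 * pi * of_int (k + l)" by (simp add: algebra_simps)
  then show "md x z" by (rule md_eq_shift)
qed

lemma md_sym: "md x y \<Longrightarrow> md y x"
proof -
  assume "md x y"
  then obtain k :: int where "x = y + 2 * pi * k" unfolding md_def by blast
  then have "y = x + 2 * pi * of_int (- k)" by simp
  then show "md y x" by (rule md_eq_shift)
qed

lemma reduce: "\<exists>t' k. - pi \<le> t' \<and> t' < pi \<and> t = t' + 2 * pi * of_int k"
proof -
  define k where "k = \<lfloor>(t + pi) / (2 * pi)\<rfloor>"
  have p: "pi > 0" by (rule pi_gt_zero)
  have a: "of_int k \<le> (t + pi) / (2 * pi)" unfolding k_def by (rule of_int_floor_le)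
  have b: "(t + pi) / (2 * pi) < of_int k + 1" unfolding k_def by (rule real_of_int_floor_add_one_gt)
  have a': "2 * pi * of_int k \<le> t + pi" using a p by (simp add: le_divide_eq mult.commute)
  have b': "t + pi < 2 * pi * (of_int k + 1)" using b p by (simp add: divide_less_eq mult.commute)
  show ?thesis
    by (rule exI[of _ "t - 2 * pi * of_int k"], rule exI[of _ k]) (use a' b' in \<open>auto simp: algebra_simps\<close>)
qed

lemma two_edges: "\<exists>a b. inI a \<and> inI b \<and> md (a + b) t"
proof -
  obtain t' k where t: "- pi \<le> t'" "t' < pi" "t = t' + 2 * pi * of_int k" using reduce by blast
  have "md (t' / 2 + t' / 2) t" unfolding md_def
    by (rule exI[of _ "- k"]) (simp add: t)
  moreover have "inI (t' / 2)" using t unfolding inI_def by auto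
  ultimately show ?thesis by blast
qed

lemma G3u:
  assumes "- pi \<le> u" "u \<le> v" "v < pi"
  shows "\<exists>a j1 j2. inI a \<and> \<bar>u - 2 * pi * of_int j1 - a\<bar> + \<bar>v - 2 * pi * of_int j2 - a\<bar> \<le> pi"
proof -
  have p: "pi > 0" by (rule pi_gt_zero)
  consider "v - u \<le> pi" "u \<le> pi / 2" "v \<ge> - (pi / 2)" | "v - u \<le> pi" "u > pi / 2" | "v - u \<le> pi" "v < - (pi / 2)"
    | "v - u > pi" "v \<le> pi / 2" | "v - u > pi" "v > pi / 2" "u \<ge> - (pi / 2)" | "v - u > pi" "v > pi / 2" "u < - (pi / 2)" "u + v \<le> 0"
    | "v - u > pi" "v > pi / 2" "u < - (pi / 2)" "u + v > 0"
    by linarith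
  then show ?thesis
  proof cases
    case 1
    show ?thesis
      by (rule exI[of _ "max u (- (pi / 2))"], rule exI[of _ 0], rule exI[of _ 0])
         (use 1 assms p in \<open>auto simp: inI_def abs_if max_def\<close>)
  next
    case 2
    show ?thesis
      by (rule exI[of _ "pi / 2"], rule exI[of _ 0], rule exI[of _ 0])
         (use 2 assms p in \<open>auto simp: inI_def abs_if\<close>)
  next
    case 3
    show ?thesis
      by (rule exI[of _ "- (pi / 2)"], rule exI[of _ 0], rule exI[of _ 0])
         (use 3 assms p in \<open>auto simp: inI_def abs_if\<close>)
  next
    case 4
    show ?thesis
      by (rule exI[of _ "max v (- (pi / 2))"], rule exI[of _ "-1"], rule exI[of _ 0])
         (use 4 assms p in \<open>auto simp: inI_def abs_if max_def\<close>)
  next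
    case 5
    show ?thesis
      by (rule exI[of _ "- (pi / 2)"], rule exI[of _ 0], rule exI[of _ 1])
         (use 5 assms p in \<open>auto simp: inI_def abs_if\<close>)
  next
    case 6
    show ?thesis
      by (rule exI[of _ "pi / 2"], rule exI[of _ "-1"], rule exI[of _ 0])
         (use 6 assms p in \<open>auto simp: inI_def abs_if\<close>)
  next
    case 7
    show ?thesis
      by (rule exI[of _ "- (pi / 2)"], rule exI[of _ 0], rule exI[of _ 1])
         (use 7 assms p in \<open>auto simp: inI_def abs_if\<close>)
  qed
qed

lemma G3: "\<exists>a k1 k2. inI a \<and> \<bar>c1 - 2 * pi * of_int k1 - a\<bar> + \<bar>c2 - 2 * pi * of_int k2 - a\<bar> \<le> pi"
proof -
  obtain u m1 where u: "- pi \<le> u" "u < pi" "c1 = u + 2 * pi * of_int m1" using reduce by blast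
  obtain v m2 where v: "- pi \<le> v" "v < pi" "c2 = v + 2 * pi * of_int m2" using reduce by blast
  show ?thesis
  proof (cases "u \<le> v")
    case True
    then obtain a j1 j2 where a: "inI a" "\<bar>u - 2 * pi * of_int j1 - a\<bar> + \<bar>v - 2 * pi * of_int j2 - a\<bar> \<le> pi"
      using G3u[of u v] u v by blast
    have "\<bar>c1 - 2 * pi * of_int (m1 + j1) - a\<bar> + \<bar>c2 - 2 * pi * of_int (m2 + j2) - a\<bar> \<le> pi"
      using a(2) by (simp add: u(3) v(3) algebra_simps)
    then show ?thesis using a(1) by blast
  next
    case False
    then obtain a j1 j2 where a: "inI a" "\<bar>v - 2 * pi * of_int j1 - a\<bar> + \<bar>u - 2 * pi * of_int j2 - a\<bar> \<le> pi"
      using G3u[of v u] u v by auto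
    have "\<bar>c1 - 2 * pi * of_int (m1 + j2) - a\<bar> + \<bar>c2 - 2 * pi * of_int (m2 + j1) - a\<bar> \<le> pi"
      using a(2) by (simp add: u(3) v(3) algebra_simps)
    then show ?thesis using a(1) by blast
  qed
qed

lemma core:
  "\<exists>a b c y1 y2 y3. inI a \<and> inI b \<and> inI c \<and> inI y1 \<and> inI y2 \<and> inI y3 \<and>
     md (a + c + y1) c1 \<and> md (a + b + y2) c2 \<and> md (d * a + b + c + y3) c3"
proof -
  have p: "pi > 0" by (rule pi_gt_zero)
  obtain a k1 k2 where a: "inI a" "\<bar>c1 - 2 * pi * of_int k1 - a\<bar> + \<bar>c2 - 2 * pi * of_int k2 - a\<bar> \<le> pi"
    using G3 by blast
  define x1 where "x1 = c1 - 2 * pi * of_int k1 - a"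
  define x2 where "x2 = c2 - 2 * pi * of_int k2 - a"
  have x12: "\<bar>x1\<bar> + \<bar>x2\<bar> \<le> pi" using a(2) by (simp add: x1_def x2_def)
  define lo1 where "lo1 = max (- (pi / 2)) (x1 - pi / 2)"
  define hi1 where "hi1 = min (pi / 2) (x1 + pi / 2)"
  define lo2 where "lo2 = max (- (pi / 2)) (x2 - pi / 2)"
  define hi2 where "hi2 = min (pi / 2) (x2 + pi / 2)"
  have len1: "hi1 - lo1 = pi - \<bar>x1\<bar>" using x12 by (auto simp: lo1_def hi1_def max_def min_def abs_if)
  have len2: "hi2 - lo2 = pi - \<bar>x2\<bar>" using x12 by (auto simp: lo2_def hi2_def max_def min_def abs_if)
  define L where "L = lo1 + lo2"
  obtain sg y3 where sg: "inI sg" "inI y3" "md (sg + y3) (c3 - d * a - L - pi / 2)"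
    using two_edges by blast
  define s where "s = L + pi / 2 + sg"
  have s1: "lo1 + lo2 \<le> s" "s \<le> hi1 + hi2" using sg(1) len1 len2 x12 by (auto simp: s_def L_def inI_def)
  define c where "c = max lo1 (s - hi2)"
  define b where "b = s - c"
  have l12: "lo1 \<le> hi1" "lo2 \<le> hi2" using len1 len2 x12 by auto
  have cb: "lo1 \<le> c" "c \<le> hi1" "lo2 \<le> b" "b \<le> hi2" using s1 l12 by (auto simp: c_def b_def max_def)
  have cI: "inI c" "inI (x1 - c)" using cb by (auto simp: inI_def lo1_def hi1_def)
  have bI: "inI b" "inI (x2 - b)" using cb by (auto simp: inI_def lo2_def hi2_def)
  have e1: "md (a + c + (x1 - c)) c1"
    unfolding md_def by (rule exI[of _ "- k1"]) (simp add: x1_def)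
  have e2: "md (a + b + (x2 - b)) c2"
    unfolding md_def by (rule exI[of _ "- k2"]) (simp add: x2_def)
  have e3: "md (d * a + b + c + y3) c3"
  proof -
    obtain k where k: "sg + y3 = c3 - d * a - L - pi / 2 + 2 * pi * of_int k" using sg(3) unfolding md_def by blast
    have "d * a + b + c + y3 = c3 + 2 * pi * of_int k" using k by (simp add: b_def s_def algebra_simps)
    then show ?thesis by (rule md_eq_shift)
  qed
  show ?thesis using a(1) bI cI sg(2) e1 e2 e3 by blast
qed


lemma two_elems:
  assumes "card N \<ge> 2"
  obtains f1 f2 where "f1 \<in> N" "f2 \<in> N" "f1 \<noteq> f2"
proof -
  have fin: "finite N" using assms by (metis card.infinite not_numeral_le_zero)
  have "N \<noteq> {}" using assms by auto
  then obtain f1 where f1: "f1 \<in> N" by auto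
  have "card (N - {f1}) \<ge> 1" using assms f1 fin by (simp add: card_Diff_singleton)
  then have "N - {f1} \<noteq> {}" by (metis card.empty not_one_le_zero)
  then obtain f2 where f2: "f2 \<in> N - {f1}" by auto
  show ?thesis using that f1 f2 by auto
qed

lemma seq:
  fixes Cy :: "'k \<Rightarrow> 'e set" and tgt :: "'k \<Rightarrow> real"
  shows "(\<forall>i<length ks. card (Cy (ks ! i) - (B \<union> \<Union>(Cy ` set (take i ks)))) \<ge> 2) \<Longrightarrow>
    (\<forall>k\<in>set ks. finite (Cy k)) \<Longrightarrow> (\<forall>f. inI (\<alpha>0 f)) \<Longrightarrow>
    \<exists>\<alpha>. (\<forall>f. inI (\<alpha> f)) \<and> (\<forall>f\<in>B. \<alpha> f = \<alpha>0 f) \<and>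
       (\<forall>f. f \<notin> B \<union> \<Union>(Cy ` set ks) \<longrightarrow> \<alpha> f = \<alpha>0 f) \<and>
       (\<forall>k\<in>set ks. md (\<Sum>f\<in>Cy k. \<alpha> f) (tgt k))"
proof (induction ks arbitrary: B \<alpha>0)
  case Nil
  then show ?case by (intro exI[of _ \<alpha>0]) auto
next
  case (Cons k ks)
  have c0: "card (Cy k - B) \<ge> 2" using Cons.prems(1)[rule_format, of 0] by simp
  obtain f1 f2 where f: "f1 \<in> Cy k - B" "f2 \<in> Cy k - B" "f1 \<noteq> f2" using two_elems[OF c0] by blast
  have fink: "finite (Cy k)" using Cons.prems(2) by simp
  define S0 where "S0 = (\<Sum>f\<in>Cy k \<inter> B. \<alpha>0 f)"
  obtain a1 a2 where a: "inI a1" "inI a2" "md (a1 + a2) (tgt k - S0)" using two_edges by blast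
  define \<alpha>1 where "\<alpha>1 f = (if f \<in> B then \<alpha>0 f else if f = f1 then a1 else if f = f2 then a2
                   else if f \<in> Cy k then 0 else \<alpha>0 f)" for f
  have I1: "\<forall>f. inI (\<alpha>1 f)" using Cons.prems(3) a by (auto simp: \<alpha>1_def inI_def)
  have cond: "\<forall>i<length ks. card (Cy (ks ! i) - ((B \<union> Cy k) \<union> \<Union>(Cy ` set (take i ks)))) \<ge> 2"
  proof (intro allI impI)
    fix i assume i: "i < length ks"
    have "card (Cy ((k # ks) ! Suc i) - (B \<union> \<Union>(Cy ` set (take (Suc i) (k # ks))))) \<ge> 2"
      using Cons.prems(1)[rule_format, of "Suc i"] i by simp
    moreover have "Cy ((k # ks) ! Suc i) - (B \<union> \<Union>(Cy ` set (take (Suc i) (k # ks))))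
        = Cy (ks ! i) - ((B \<union> Cy k) \<union> \<Union>(Cy ` set (take i ks)))" by auto
    ultimately show "card (Cy (ks ! i) - ((B \<union> Cy k) \<union> \<Union>(Cy ` set (take i ks)))) \<ge> 2" by simp
  qed
  obtain \<alpha> where al: "\<forall>f. inI (\<alpha> f)" "\<forall>f\<in>B \<union> Cy k. \<alpha> f = \<alpha>1 f"
      "\<forall>f. f \<notin> (B \<union> Cy k) \<union> \<Union>(Cy ` set ks) \<longrightarrow> \<alpha> f = \<alpha>1 f"
      "\<forall>k\<in>set ks. md (\<Sum>f\<in>Cy k. \<alpha> f) (tgt k)"
    using Cons.IH[OF cond _ I1] Cons.prems(2) by auto
  have sumk: "(\<Sum>f\<in>Cy k. \<alpha> f) = S0 + (a1 + a2)"
  proof -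
    have "(\<Sum>f\<in>Cy k. \<alpha> f) = (\<Sum>f\<in>Cy k. \<alpha>1 f)" using al(2) by (intro sum.cong) auto
    also have "\<dots> = (\<Sum>f\<in>Cy k \<inter> B. \<alpha>1 f) + (\<Sum>f\<in>Cy k - B. \<alpha>1 f)"
      by (rule sum.Int_Diff[OF fink])
    also have "(\<Sum>f\<in>Cy k \<inter> B. \<alpha>1 f) = S0" unfolding S0_def by (intro sum.cong) (auto simp: \<alpha>1_def)
    also have "(\<Sum>f\<in>Cy k - B. \<alpha>1 f) = a1 + a2"
    proof -
      have fin2: "finite (Cy k - B)" using fink by simp
      have "(\<Sum>f\<in>Cy k - B. \<alpha>1 f) = \<alpha>1 f1 + (\<Sum>f\<in>Cy k - B - {f1}. \<alpha>1 f)"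
        using sum.remove[OF fin2 f(1)] by simp
      also have "(\<Sum>f\<in>Cy k - B - {f1}. \<alpha>1 f) = \<alpha>1 f2 + (\<Sum>f\<in>Cy k - B - {f1} - {f2}. \<alpha>1 f)"
        using sum.remove[of "Cy k - B - {f1}" f2] fin2 f by simp
      also have "(\<Sum>f\<in>Cy k - B - {f1} - {f2}. \<alpha>1 f) = 0"
        by (intro sum.neutral) (auto simp: \<alpha>1_def)
      finally show ?thesis using f by (simp add: \<alpha>1_def)
    qed
    finally show ?thesis .
  qed
  have mdk: "md (\<Sum>f\<in>Cy k. \<alpha> f) (tgt k)"
  proof -
    obtain j :: int where "a1 + a2 = tgt k - S0 + 2 * pi * j" using a(3) unfolding md_def by blast
    then have "(\<Sum>f\<in>Cy k. \<alpha> f) = tgt k + 2 * pi * j" using sumk by simp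
    then show ?thesis by (rule md_eq_shift)
  qed
  show ?case
  proof (intro exI[of _ \<alpha>] conjI)
    show "\<forall>f. inI (\<alpha> f)" using al(1) .
    show "\<forall>f\<in>B. \<alpha> f = \<alpha>0 f" using al(2) by (auto simp: \<alpha>1_def)
    show "\<forall>f. f \<notin> B \<union> \<Union>(Cy ` set (k # ks)) \<longrightarrow> \<alpha> f = \<alpha>0 f"
      using al(3) f by (auto simp: \<alpha>1_def)
    show "\<forall>k'\<in>set (k # ks). md (\<Sum>f\<in>Cy k'. \<alpha> f) (tgt k')" using al(4) mdk by auto
  qed
qed


definition deg2 :: "'a set set \<Rightarrow> bool" where
  "deg2 C \<longleftrightarrow> (\<forall>v. card {f \<in> C. v \<in> f} \<in> {0, 2})"

definition hascl :: "'a set set \<Rightarrow> 'a set set \<Rightarrow> 'a set set \<Rightarrow> 'a set set \<Rightarrow> bool \<Rightarrow> bool \<Rightarrow> bool \<Rightarrow> bool" where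
  "hascl H C1 C2 C3 b1 b2 b3 \<longleftrightarrow> (\<exists>f\<in>H. (f \<in> C1 \<longleftrightarrow> b1) \<and> (f \<in> C2 \<longleftrightarrow> b2) \<and> (f \<in> C3 \<longleftrightarrow> b3))"

definition good :: "'a set set \<Rightarrow> 'a set set \<Rightarrow> 'a set set \<Rightarrow> 'a set set \<Rightarrow> bool" where
  "good H C1 C2 C3 \<longleftrightarrow>
    (hascl H C1 C2 C3 True False False \<and> hascl H C1 C2 C3 False True False \<and> hascl H C1 C2 C3 False False True \<longrightarrow>
     (hascl H C1 C2 C3 True True False \<and> hascl H C1 C2 C3 True False True \<and> hascl H C1 C2 C3 False True True) \<or>
     (hascl H C1 C2 C3 True True True \<and> hascl H C1 C2 C3 True False True \<and> hascl H C1 C2 C3 False True True) \<or>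
     (hascl H C1 C2 C3 True True True \<and> hascl H C1 C2 C3 True True False \<and> hascl H C1 C2 C3 False True True) \<or>
     (hascl H C1 C2 C3 True True True \<and> hascl H C1 C2 C3 True True False \<and> hascl H C1 C2 C3 True False True))"

lemma K4'_edges: "K4' H \<Longrightarrow> finite H \<and> (\<forall>f\<in>H. \<exists>a b. a \<noteq> b \<and> f = {a, b})"
proof (induction rule: K4'.induct)
  case (base a b c d)
  then show ?case by auto
next
  case (subdiv H x y z)
  have xy: "x \<noteq> y"
  proof
    assume "x = y"
    then have "{x, y} = {x}" by simp
    then show False using subdiv by (metis doubleton_eq_iff insert_absorb2)
  qed
  have "x \<in> \<Union>H" "y \<in> \<Union>H" using subdiv(2) by auto
  then have "z \<noteq> x" "z \<noteq> y" using subdiv(3) by auto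
  then show ?case using subdiv xy by auto
qed

lemma card3:
  assumes "distinct [p, q, r]"
  shows "card {f \<in> {p, q, r}. P f} \<in> {0, 2} \<longleftrightarrow> (P p \<longleftrightarrow> \<not> (P q \<longleftrightarrow> P r))"
proof -
  have eq: "{f \<in> {p, q, r}. P f} = (if P p then {p} else {}) \<union> (if P q then {q} else {}) \<union> (if P r then {r} else {})"
    by auto
  show ?thesis unfolding eq using assms by (cases "P p"; cases "P q"; cases "P r") auto
qed

lemma deg_at3:
  assumes "C \<subseteq> H" "\<And>f. f \<in> H \<Longrightarrow> v \<in> f \<longleftrightarrow> f \<in> {p, q, r}" "p \<in> H" "q \<in> H" "r \<in> H"
  shows "{f \<in> C. v \<in> f} = {f \<in> {p, q, r}. f \<in> C}"
  using assms by auto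

lemma K4_base:
  assumes d: "distinct [a, b, c, d]"
    and H: "{{a, b}, {a, c}, {a, d}, {b, c}, {b, d}, {c, d}} = C1 \<union> C2 \<union> C3"
    and g: "deg2 C1" "deg2 C2" "deg2 C3"
  shows "good {{a, b}, {a, c}, {a, d}, {b, c}, {b, d}, {c, d}} C1 C2 C3"
proof -
  let ?H = "{{a, b}, {a, c}, {a, d}, {b, c}, {b, d}, {c, d}}"
  have sub: "C1 \<subseteq> ?H" "C2 \<subseteq> ?H" "C3 \<subseteq> ?H" using H by auto
  have va: "\<And>f. f \<in> ?H \<Longrightarrow> a \<in> f \<longleftrightarrow> f \<in> {{a, b}, {a, c}, {a, d}}" using d by auto
  have vb: "\<And>f. f \<in> ?H \<Longrightarrow> b \<in> f \<longleftrightarrow> f \<in> {{a, b}, {b, c}, {b, d}}" using d by auto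
  have vc: "\<And>f. f \<in> ?H \<Longrightarrow> c \<in> f \<longleftrightarrow> f \<in> {{a, c}, {b, c}, {c, d}}" using d by auto
  have vd: "\<And>f. f \<in> ?H \<Longrightarrow> d \<in> f \<longleftrightarrow> f \<in> {{a, d}, {b, d}, {c, d}}" using d by auto
  have da: "distinct [{a, b}, {a, c}, {a, d}]" using d by (auto simp: doubleton_eq_iff)
  have db: "distinct [{a, b}, {b, c}, {b, d}]" using d by (auto simp: doubleton_eq_iff)
  have dc: "distinct [{a, c}, {b, c}, {c, d}]" using d by (auto simp: doubleton_eq_iff)
  have dd: "distinct [{a, d}, {b, d}, {c, d}]" using d by (auto simp: doubleton_eq_iff)
  have par: "({a, b} \<in> C \<longleftrightarrow> \<not> ({a, c} \<in> C \<longleftrightarrow> {a, d} \<in> C)) \<and>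
             ({a, b} \<in> C \<longleftrightarrow> \<not> ({b, c} \<in> C \<longleftrightarrow> {b, d} \<in> C)) \<and>
             ({a, c} \<in> C \<longleftrightarrow> \<not> ({b, c} \<in> C \<longleftrightarrow> {c, d} \<in> C)) \<and>
             ({a, d} \<in> C \<longleftrightarrow> \<not> ({b, d} \<in> C \<longleftrightarrow> {c, d} \<in> C))"
    if "C \<subseteq> ?H" "deg2 C" for C
  proof -
    have "card {f \<in> C. a \<in> f} \<in> {0, 2}" "card {f \<in> C. b \<in> f} \<in> {0, 2}"
         "card {f \<in> C. c \<in> f} \<in> {0, 2}" "card {f \<in> C. d \<in> f} \<in> {0, 2}"
      using that(2) unfolding deg2_def by blast+
    moreover have "{f \<in> C. a \<in> f} = {f \<in> {{a, b}, {a, c}, {a, d}}. f \<in> C}"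
      by (rule deg_at3[OF that(1) va]) auto
    moreover have "{f \<in> C. b \<in> f} = {f \<in> {{a, b}, {b, c}, {b, d}}. f \<in> C}"
      by (rule deg_at3[OF that(1) vb]) auto
    moreover have "{f \<in> C. c \<in> f} = {f \<in> {{a, c}, {b, c}, {c, d}}. f \<in> C}"
      by (rule deg_at3[OF that(1) vc]) auto
    moreover have "{f \<in> C. d \<in> f} = {f \<in> {{a, d}, {b, d}, {c, d}}. f \<in> C}"
      by (rule deg_at3[OF that(1) vd]) auto
    ultimately show ?thesis
      using card3[OF da, of "\<lambda>f. f \<in> C"] card3[OF db, of "\<lambda>f. f \<in> C"]
            card3[OF dc, of "\<lambda>f. f \<in> C"] card3[OF dd, of "\<lambda>f. f \<in> C"] by simp
  qed
  note p1 = par[OF sub(1) g(1)] and p2 = par[OF sub(2) g(2)] and p3 = par[OF sub(3) g(3)]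
  have cov: "\<And>f. f \<in> ?H \<Longrightarrow> f \<in> C1 \<or> f \<in> C2 \<or> f \<in> C3" using H by auto
  have c1: "{a,b} \<in> C1 \<or> {a,b} \<in> C2 \<or> {a,b} \<in> C3" "{a,c} \<in> C1 \<or> {a,c} \<in> C2 \<or> {a,c} \<in> C3"
     "{a,d} \<in> C1 \<or> {a,d} \<in> C2 \<or> {a,d} \<in> C3" "{b,c} \<in> C1 \<or> {b,c} \<in> C2 \<or> {b,c} \<in> C3"
     "{b,d} \<in> C1 \<or> {b,d} \<in> C2 \<or> {b,d} \<in> C3" "{c,d} \<in> C1 \<or> {c,d} \<in> C2 \<or> {c,d} \<in> C3"
    using cov by auto
  show ?thesis
    unfolding good_def hascl_def bex_simps(5) bex_simps(3) simp_thms
    using p1 p2 p3 c1 by smt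
qed

definition trs :: "'a \<Rightarrow> 'a \<Rightarrow> 'a \<Rightarrow> 'a set set \<Rightarrow> 'a set set" where
  "trs x y z C = (C - {{x, z}, {z, y}}) \<union> (if {x, z} \<in> C then {{x, y}} else {})"

lemma card_swap:
  assumes "finite S" "a \<in> S" "b \<notin> S"
  shows "card (insert b (S - {a})) = card S"
proof -
  have "card (S - {a}) = card S - 1" using assms by (simp add: card_Diff_singleton)
  moreover have "card S \<ge> 1" using assms by (metis One_nat_def Suc_leI card_gt_0_iff empty_iff)
  ultimately show ?thesis using assms by (simp add: card_insert_disjoint)
qed

lemma subdiv_step:
  assumes H: "finite H" "{x, y} \<in> H" "z \<notin> \<Union>H" "x \<noteq> y"
    and C: "C \<subseteq> (H - {{x, y}}) \<union> {{x, z}, {z, y}}" "deg2 C"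
  shows "({x, z} \<in> C \<longleftrightarrow> {z, y} \<in> C)" "deg2 (trs x y z C)" "trs x y z C \<subseteq> H"
    "\<And>f. f \<in> H \<Longrightarrow> f \<noteq> {x, y} \<Longrightarrow> f \<in> trs x y z C \<longleftrightarrow> f \<in> C"
    "{x, y} \<in> trs x y z C \<longleftrightarrow> {x, z} \<in> C"
proof -
  have zx: "z \<noteq> x" "z \<noteq> y" using H by auto
  have nH: "{x, z} \<notin> H" "{z, y} \<notin> H" using H(3) by auto
  have ne: "{x, z} \<noteq> {z, y}" "{x, y} \<noteq> {x, z}" "{x, y} \<noteq> {z, y}" using zx H(4) by (auto simp: doubleton_eq_iff)
  have finC: "finite C" using C(1) H(1) finite_subset by auto
  have xyC: "{x, y} \<notin> C" using C(1) ne by auto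
  have zset: "{f \<in> C. z \<in> f} = {f \<in> {{x, z}, {z, y}}. f \<in> C}"
  proof -
    have "f \<in> {{x, z}, {z, y}}" if "f \<in> C" "z \<in> f" for f
    proof (rule ccontr)
      assume "f \<notin> {{x, z}, {z, y}}"
      then have "f \<in> H" using that C(1) by auto
      then show False using H(3) that by auto
    qed
    then show ?thesis by auto
  qed
  have cz: "card {f \<in> C. z \<in> f} \<in> {0, 2}" using C(2) by (simp add: deg2_def)
  have sp: "{f \<in> {{x, z}, {z, y}}. f \<in> C} = (if {x, z} \<in> C then {{x, z}} else {}) \<union> (if {z, y} \<in> C then {{z, y}} else {})"
    by auto
  show eqv: "{x, z} \<in> C \<longleftrightarrow> {z, y} \<in> C"
  proof (rule ccontr)
    assume a: "\<not> ?thesis"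
    have "card ((if {x, z} \<in> C then {{x, z}} else {}) \<union> (if {z, y} \<in> C then {{z, y}} else {})) = 1"
      using a by (cases "{x, z} \<in> C") auto
    then have "card {f \<in> C. z \<in> f} = 1" unfolding zset sp .
    then show False using cz by simp
  qed
  show "trs x y z C \<subseteq> H" using C(1) H(2) by (auto simp: trs_def)
  show "\<And>f. f \<in> H \<Longrightarrow> f \<noteq> {x, y} \<Longrightarrow> f \<in> trs x y z C \<longleftrightarrow> f \<in> C"
    using nH by (auto simp: trs_def)
  show "{x, y} \<in> trs x y z C \<longleftrightarrow> {x, z} \<in> C" using ne xyC by (auto simp: trs_def)
  show "deg2 (trs x y z C)"
    unfolding deg2_def
  proof
    fix v
    show "card {f \<in> trs x y z C. v \<in> f} \<in> {0, 2}"
    proof (cases "{x, z} \<in> C")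
      case False
      then have "{z, y} \<notin> C" using eqv by simp
      then have "trs x y z C = C" using False by (auto simp: trs_def)
      then show ?thesis using C(2) by (simp add: deg2_def)
    next
      case True
      then have zy: "{z, y} \<in> C" using eqv by simp
      have tr: "trs x y z C = insert {x, y} (C - {{x, z}, {z, y}})" using True by (simp add: trs_def)
      consider "v = z" | "v = x" | "v = y" | "v \<noteq> z" "v \<noteq> x" "v \<noteq> y" by blast
      then show ?thesis
      proof cases
        case 1
        have "{f \<in> trs x y z C. v \<in> f} = {}"
        proof -
          have "v \<notin> f" if "f \<in> trs x y z C" for f
            using that \<open>trs x y z C \<subseteq> H\<close> H(3) 1 by auto
          then show ?thesis by auto
        qed
        then show ?thesis by (simp only: card.empty) simp
      next
        case 2
        have "{f \<in> trs x y z C. v \<in> f} = insert {x, y} ({f \<in> C. v \<in> f} - {{x, z}})"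
          unfolding tr using 2 zx H(4) by auto
        moreover have "card (insert {x, y} ({f \<in> C. v \<in> f} - {{x, z}})) = card {f \<in> C. v \<in> f}"
          by (rule card_swap) (use finC True 2 xyC in auto)
        ultimately show ?thesis using C(2) by (simp add: deg2_def)
      next
        case 3
        have "{f \<in> trs x y z C. v \<in> f} = insert {x, y} ({f \<in> C. v \<in> f} - {{z, y}})"
          unfolding tr using 3 zx H(4) by auto
        moreover have "card (insert {x, y} ({f \<in> C. v \<in> f} - {{z, y}})) = card {f \<in> C. v \<in> f}"
          by (rule card_swap) (use finC zy 3 xyC in auto)
        ultimately show ?thesis using C(2) by (simp add: deg2_def)
      next
        case 4
        have "{f \<in> trs x y z C. v \<in> f} = {f \<in> C. v \<in> f}"
          unfolding tr using 4 by auto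
        then show ?thesis using C(2) by (simp add: deg2_def)
      qed
    qed
  qed
qed

lemma K4_cls: "K4' H \<Longrightarrow> (\<forall>C1 C2 C3. H = C1 \<union> C2 \<union> C3 \<longrightarrow> deg2 C1 \<longrightarrow> deg2 C2 \<longrightarrow> deg2 C3 \<longrightarrow> good H C1 C2 C3)"
proof (induction rule: K4'.induct)
  case (base a b c d)
  show ?case
  proof (intro allI impI)
    fix C1 C2 C3
    assume "{{a, b}, {a, c}, {a, d}, {b, c}, {b, d}, {c, d}} = C1 \<union> C2 \<union> C3" "deg2 C1" "deg2 C2" "deg2 C3"
    then show "good {{a, b}, {a, c}, {a, d}, {b, c}, {b, d}, {c, d}} C1 C2 C3"
      by (rule K4_base[OF base])
  qed
next
  case (subdiv H x y z)
  have Hf: "finite H" and xy: "x \<noteq> y"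
  proof -
    show "finite H" using K4'_edges[OF subdiv(1)] by simp
    have "\<forall>f\<in>H. \<exists>a b. a \<noteq> b \<and> f = {a, b}" using K4'_edges[OF subdiv(1)] by simp
    then have "\<exists>a b. a \<noteq> b \<and> {x, y} = {a, b}" by (rule bspec[OF _ subdiv(2)])
    then show "x \<noteq> y" by (auto simp: doubleton_eq_iff)
  qed
  have zx: "z \<noteq> x" "z \<noteq> y" using subdiv(2,3) by auto
  have nH: "{x, z} \<notin> H" "{z, y} \<notin> H" using subdiv(3) by auto
  show ?case
  proof (intro allI impI)
    fix C1 C2 C3
    assume U: "H - {{x, y}} \<union> {{x, z}, {z, y}} = C1 \<union> C2 \<union> C3" and g: "deg2 C1" "deg2 C2" "deg2 C3"
    let ?H' = "H - {{x, y}} \<union> {{x, z}, {z, y}}"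
    have sub: "C1 \<subseteq> ?H'" "C2 \<subseteq> ?H'" "C3 \<subseteq> ?H'" using U by auto
    note s1 = subdiv_step[OF Hf subdiv(2,3) xy sub(1) g(1)]
    note s2 = subdiv_step[OF Hf subdiv(2,3) xy sub(2) g(2)]
    note s3 = subdiv_step[OF Hf subdiv(2,3) xy sub(3) g(3)]
    let ?D1 = "trs x y z C1" and ?D2 = "trs x y z C2" and ?D3 = "trs x y z C3"
    have UH: "H = ?D1 \<union> ?D2 \<union> ?D3"
    proof
      show "?D1 \<union> ?D2 \<union> ?D3 \<subseteq> H" using s1(3) s2(3) s3(3) by auto
    next
      show "H \<subseteq> ?D1 \<union> ?D2 \<union> ?D3"
      proof
        fix f assume f: "f \<in> H"
        show "f \<in> ?D1 \<union> ?D2 \<union> ?D3"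
        proof (cases "f = {x, y}")
          case True
          have "{x, z} \<in> C1 \<union> C2 \<union> C3" using U by auto
          then show ?thesis using True s1(5) s2(5) s3(5) by auto
        next
          case False
          then have "f \<in> C1 \<union> C2 \<union> C3" using U f by auto
          then show ?thesis using s1(4)[OF f False] s2(4)[OF f False] s3(4)[OF f False] by auto
        qed
      qed
    qed
    have G: "good H ?D1 ?D2 ?D3" by (rule subdiv.IH[rule_format, OF UH s1(2) s2(2) s3(2)])
    have hc: "hascl H ?D1 ?D2 ?D3 b1 b2 b3 \<longleftrightarrow> hascl ?H' C1 C2 C3 b1 b2 b3" for b1 b2 b3
    proof
      assume "hascl H ?D1 ?D2 ?D3 b1 b2 b3"
      then obtain f where f: "f \<in> H" "(f \<in> ?D1 \<longleftrightarrow> b1) \<and> (f \<in> ?D2 \<longleftrightarrow> b2) \<and> (f \<in> ?D3 \<longleftrightarrow> b3)"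
        unfolding hascl_def by auto
      show "hascl ?H' C1 C2 C3 b1 b2 b3"
      proof (cases "f = {x, y}")
        case True
        then have "({x, z} \<in> C1 \<longleftrightarrow> b1) \<and> ({x, z} \<in> C2 \<longleftrightarrow> b2) \<and> ({x, z} \<in> C3 \<longleftrightarrow> b3)"
          using f(2) s1(5) s2(5) s3(5) by simp
        then show ?thesis unfolding hascl_def by (intro bexI[of _ "{x, z}"]) auto
      next
        case False
        then have "(f \<in> C1 \<longleftrightarrow> b1) \<and> (f \<in> C2 \<longleftrightarrow> b2) \<and> (f \<in> C3 \<longleftrightarrow> b3)"
          using f s1(4)[OF f(1) False] s2(4)[OF f(1) False] s3(4)[OF f(1) False] by simp
        moreover have "f \<in> ?H'" using f(1) False by auto
        ultimately show ?thesis unfolding hascl_def by blast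
      qed
    next
      assume "hascl ?H' C1 C2 C3 b1 b2 b3"
      then obtain f where f: "f \<in> ?H'" "(f \<in> C1 \<longleftrightarrow> b1) \<and> (f \<in> C2 \<longleftrightarrow> b2) \<and> (f \<in> C3 \<longleftrightarrow> b3)"
        unfolding hascl_def by auto
      show "hascl H ?D1 ?D2 ?D3 b1 b2 b3"
      proof (cases "f \<in> {{x, z}, {z, y}}")
        case True
        then have "({x, z} \<in> C1 \<longleftrightarrow> b1) \<and> ({x, z} \<in> C2 \<longleftrightarrow> b2) \<and> ({x, z} \<in> C3 \<longleftrightarrow> b3)"
          using f(2) s1(1) s2(1) s3(1) by auto
        then have "({x, y} \<in> ?D1 \<longleftrightarrow> b1) \<and> ({x, y} \<in> ?D2 \<longleftrightarrow> b2) \<and> ({x, y} \<in> ?D3 \<longleftrightarrow> b3)"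
          using s1(5) s2(5) s3(5) by simp
        then show ?thesis unfolding hascl_def using subdiv(2) by (intro bexI[of _ "{x, y}"]) auto
      next
        case False
        then have fH: "f \<in> H" "f \<noteq> {x, y}" using f(1) by auto
        then have "(f \<in> ?D1 \<longleftrightarrow> b1) \<and> (f \<in> ?D2 \<longleftrightarrow> b2) \<and> (f \<in> ?D3 \<longleftrightarrow> b3)"
          using f(2) s1(4)[OF fH] s2(4)[OF fH] s3(4)[OF fH] by simp
        then show ?thesis unfolding hascl_def using fH(1) by blast
      qed
    qed
    show "good ?H' C1 C2 C3" using G unfolding good_def hc .
  qed
qed


lemma inI0: "inI 0" using pi_gt_zero by (simp add: inI_def)

lemma assign6:
  assumes d: "distinct [g1, g2, g3, g4, g5, g6]"
    and v: "inI v1" "inI v2" "inI v3" "inI v4" "inI v5" "inI v6"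
  shows "\<exists>\<alpha>. (\<forall>f. inI (\<alpha> f)) \<and> (\<forall>f. f \<notin> {g1, g2, g3, g4, g5, g6} \<longrightarrow> \<alpha> f = 0) \<and>
    (\<forall>C. finite C \<longrightarrow> (\<Sum>f\<in>C. \<alpha> f) = (if g1 \<in> C then v1 else 0) + (if g2 \<in> C then v2 else 0) +
        (if g3 \<in> C then v3 else 0) + (if g4 \<in> C then v4 else 0) + (if g5 \<in> C then v5 else 0) + (if g6 \<in> C then v6 else 0))"
proof -
  define \<alpha> where "\<alpha> f = (if f = g1 then v1 else 0) + (if f = g2 then v2 else 0) + (if f = g3 then v3 else 0) +
     (if f = g4 then v4 else 0) + (if f = g5 then v5 else 0) + (if f = g6 then v6 else 0)" for f
  have I: "inI (\<alpha> f)" for f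
  proof -
    consider "f = g1" | "f = g2" | "f = g3" | "f = g4" | "f = g5" | "f = g6" | "f \<notin> {g1, g2, g3, g4, g5, g6}" by auto
    then show ?thesis
      by cases (use d v inI0 in \<open>auto simp: \<alpha>_def\<close>)
  qed
  have Z: "\<forall>f. f \<notin> {g1, g2, g3, g4, g5, g6} \<longrightarrow> \<alpha> f = 0" by (auto simp: \<alpha>_def)
  have S: "(\<Sum>f\<in>C. \<alpha> f) = (if g1 \<in> C then v1 else 0) + (if g2 \<in> C then v2 else 0) +
        (if g3 \<in> C then v3 else 0) + (if g4 \<in> C then v4 else 0) + (if g5 \<in> C then v5 else 0) + (if g6 \<in> C then v6 else 0)"
    if "finite C" for C
    using that by (simp add: \<alpha>_def sum.distrib)
  show ?thesis using I Z S by blast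
qed

lemma K4_solve:
  assumes K: "K4' (C1 \<union> C2 \<union> C3)"
    and fin: "finite C1" "finite C2" "finite C3"
    and g: "deg2 C1" "deg2 C2" "deg2 C3"
    and e1: "e1 \<in> C1" "e1 \<notin> C2" "e1 \<notin> C3"
    and e2: "e2 \<notin> C1" "e2 \<in> C2" "e2 \<notin> C3"
    and e3: "e3 \<notin> C1" "e3 \<notin> C2" "e3 \<in> C3"
  shows "\<exists>\<alpha>. (\<forall>f. inI (\<alpha> f)) \<and> (\<forall>f. f \<notin> C1 \<union> C2 \<union> C3 \<longrightarrow> \<alpha> f = 0) \<and>
     md (\<Sum>f\<in>C1. \<alpha> f) c1 \<and> md (\<Sum>f\<in>C2. \<alpha> f) c2 \<and> md (\<Sum>f\<in>C3. \<alpha> f) c3"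
proof -
  let ?H = "C1 \<union> C2 \<union> C3"
  have G: "good ?H C1 C2 C3" using K4_cls[OF K] g by blast
  have s1: "hascl ?H C1 C2 C3 True False False" unfolding hascl_def using e1 by (intro bexI[of _ e1]) auto
  have s2: "hascl ?H C1 C2 C3 False True False" unfolding hascl_def using e2 by (intro bexI[of _ e2]) auto
  have s3: "hascl ?H C1 C2 C3 False False True" unfolding hascl_def using e3 by (intro bexI[of _ e3]) auto
  have pat: "(hascl ?H C1 C2 C3 True True False \<and> hascl ?H C1 C2 C3 True False True \<and> hascl ?H C1 C2 C3 False True True) \<or>
     (hascl ?H C1 C2 C3 True True True \<and> hascl ?H C1 C2 C3 True False True \<and> hascl ?H C1 C2 C3 False True True) \<or>
     (hascl ?H C1 C2 C3 True True True \<and> hascl ?H C1 C2 C3 True True False \<and> hascl ?H C1 C2 C3 False True True) \<or>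
     (hascl ?H C1 C2 C3 True True True \<and> hascl ?H C1 C2 C3 True True False \<and> hascl ?H C1 C2 C3 True False True)"
    using G s1 s2 s3 unfolding good_def by blast
  have sub: "\<And>g1 g2 g3 g4 g5 g6. {g1, g2, g3, g4, g5, g6} \<subseteq> ?H \<Longrightarrow> f \<notin> ?H \<Longrightarrow> f \<notin> {g1, g2, g3, g4, g5, g6}" for f
    by auto
  from pat show ?thesis
  proof (elim disjE conjE)
    assume h: "hascl ?H C1 C2 C3 True True False" "hascl ?H C1 C2 C3 True False True" "hascl ?H C1 C2 C3 False True True"
    obtain r12 where r12: "r12 \<in> ?H" "r12 \<in> C1" "r12 \<in> C2" "r12 \<notin> C3" using h(1) unfolding hascl_def by auto
    obtain r13 where r13: "r13 \<in> ?H" "r13 \<in> C1" "r13 \<notin> C2" "r13 \<in> C3" using h(2) unfolding hascl_def by auto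
    obtain r23 where r23: "r23 \<in> ?H" "r23 \<notin> C1" "r23 \<in> C2" "r23 \<in> C3" using h(3) unfolding hascl_def by auto
    obtain a b c y1 y2 y3 where cr: "inI a" "inI b" "inI c" "inI y1" "inI y2" "inI y3"
      "md (a + c + y1) c1" "md (a + b + y2) c2" "md (0 * a + b + c + y3) c3"
      using core[of c1 c2 0 c3] by blast
    have d: "distinct [r12, r23, r13, e1, e2, e3]" using r12 r13 r23 e1 e2 e3 by auto
    obtain \<alpha> where al: "\<forall>f. inI (\<alpha> f)" "\<forall>f. f \<notin> {r12, r23, r13, e1, e2, e3} \<longrightarrow> \<alpha> f = 0"
      "\<forall>C. finite C \<longrightarrow> (\<Sum>f\<in>C. \<alpha> f) = (if r12 \<in> C then a else 0) + (if r23 \<in> C then b else 0) +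
        (if r13 \<in> C then c else 0) + (if e1 \<in> C then y1 else 0) + (if e2 \<in> C then y2 else 0) + (if e3 \<in> C then y3 else 0)"
      using assign6[OF d cr(1-6)] by blast
    have "(\<Sum>f\<in>C1. \<alpha> f) = a + c + y1" using al(3) fin(1) r12 r13 r23 e1 e2 e3 by simp
    moreover have "(\<Sum>f\<in>C2. \<alpha> f) = a + b + y2" using al(3) fin(2) r12 r13 r23 e1 e2 e3 by simp
    moreover have "(\<Sum>f\<in>C3. \<alpha> f) = 0 * a + b + c + y3" using al(3) fin(3) r12 r13 r23 e1 e2 e3 by simp
    moreover have "\<forall>f. f \<notin> ?H \<longrightarrow> \<alpha> f = 0" using al(2) r12 r13 r23 e1 e2 e3 by auto
    ultimately show ?thesis using al(1) cr(7-9) by auto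
  next
    assume h: "hascl ?H C1 C2 C3 True True True" "hascl ?H C1 C2 C3 True False True" "hascl ?H C1 C2 C3 False True True"
    obtain t where t: "t \<in> ?H" "t \<in> C1" "t \<in> C2" "t \<in> C3" using h(1) unfolding hascl_def by auto
    obtain r13 where r13: "r13 \<in> ?H" "r13 \<in> C1" "r13 \<notin> C2" "r13 \<in> C3" using h(2) unfolding hascl_def by auto
    obtain r23 where r23: "r23 \<in> ?H" "r23 \<notin> C1" "r23 \<in> C2" "r23 \<in> C3" using h(3) unfolding hascl_def by auto
    obtain a b c y1 y2 y3 where cr: "inI a" "inI b" "inI c" "inI y1" "inI y2" "inI y3"
      "md (a + c + y1) c1" "md (a + b + y2) c2" "md (1 * a + b + c + y3) c3"
      using core[of c1 c2 1 c3] by blast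
    have d: "distinct [t, r23, r13, e1, e2, e3]" using t r13 r23 e1 e2 e3 by auto
    obtain \<alpha> where al: "\<forall>f. inI (\<alpha> f)" "\<forall>f. f \<notin> {t, r23, r13, e1, e2, e3} \<longrightarrow> \<alpha> f = 0"
      "\<forall>C. finite C \<longrightarrow> (\<Sum>f\<in>C. \<alpha> f) = (if t \<in> C then a else 0) + (if r23 \<in> C then b else 0) +
        (if r13 \<in> C then c else 0) + (if e1 \<in> C then y1 else 0) + (if e2 \<in> C then y2 else 0) + (if e3 \<in> C then y3 else 0)"
      using assign6[OF d cr(1-6)] by blast
    have "(\<Sum>f\<in>C1. \<alpha> f) = a + c + y1" using al(3) fin(1) t r13 r23 e1 e2 e3 by simp
    moreover have "(\<Sum>f\<in>C2. \<alpha> f) = a + b + y2" using al(3) fin(2) t r13 r23 e1 e2 e3 by simp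
    moreover have "(\<Sum>f\<in>C3. \<alpha> f) = 1 * a + b + c + y3" using al(3) fin(3) t r13 r23 e1 e2 e3 by simp
    moreover have "\<forall>f. f \<notin> ?H \<longrightarrow> \<alpha> f = 0" using al(2) t r13 r23 e1 e2 e3 by auto
    ultimately show ?thesis using al(1) cr(7-9) by auto
  next
    assume h: "hascl ?H C1 C2 C3 True True True" "hascl ?H C1 C2 C3 True True False" "hascl ?H C1 C2 C3 False True True"
    obtain t where t: "t \<in> ?H" "t \<in> C1" "t \<in> C2" "t \<in> C3" using h(1) unfolding hascl_def by auto
    obtain r12 where r12: "r12 \<in> ?H" "r12 \<in> C1" "r12 \<in> C2" "r12 \<notin> C3" using h(2) unfolding hascl_def by auto
    obtain r23 where r23: "r23 \<in> ?H" "r23 \<notin> C1" "r23 \<in> C2" "r23 \<in> C3" using h(3) unfolding hascl_def by auto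
    obtain a b c y1 y2 y3 where cr: "inI a" "inI b" "inI c" "inI y1" "inI y2" "inI y3"
      "md (a + c + y1) c1" "md (a + b + y2) c3" "md (1 * a + b + c + y3) c2"
      using core[of c1 c3 1 c2] by blast
    have d: "distinct [t, r23, r12, e1, e3, e2]" using t r12 r23 e1 e2 e3 by auto
    obtain \<alpha> where al: "\<forall>f. inI (\<alpha> f)" "\<forall>f. f \<notin> {t, r23, r12, e1, e3, e2} \<longrightarrow> \<alpha> f = 0"
      "\<forall>C. finite C \<longrightarrow> (\<Sum>f\<in>C. \<alpha> f) = (if t \<in> C then a else 0) + (if r23 \<in> C then b else 0) +
        (if r12 \<in> C then c else 0) + (if e1 \<in> C then y1 else 0) + (if e3 \<in> C then y2 else 0) + (if e2 \<in> C then y3 else 0)"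
      using assign6[OF d cr(1-6)] by blast
    have "(\<Sum>f\<in>C1. \<alpha> f) = a + c + y1" using al(3) fin(1) t r12 r23 e1 e2 e3 by simp
    moreover have "(\<Sum>f\<in>C3. \<alpha> f) = a + b + y2" using al(3) fin(3) t r12 r23 e1 e2 e3 by simp
    moreover have "(\<Sum>f\<in>C2. \<alpha> f) = 1 * a + b + c + y3" using al(3) fin(2) t r12 r23 e1 e2 e3 by simp
    moreover have "\<forall>f. f \<notin> ?H \<longrightarrow> \<alpha> f = 0" using al(2) t r12 r23 e1 e2 e3 by auto
    ultimately show ?thesis using al(1) cr(7-9) by auto
  next
    assume h: "hascl ?H C1 C2 C3 True True True" "hascl ?H C1 C2 C3 True True False" "hascl ?H C1 C2 C3 True False True"
    obtain t where t: "t \<in> ?H" "t \<in> C1" "t \<in> C2" "t \<in> C3" using h(1) unfolding hascl_def by auto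
    obtain r12 where r12: "r12 \<in> ?H" "r12 \<in> C1" "r12 \<in> C2" "r12 \<notin> C3" using h(2) unfolding hascl_def by auto
    obtain r13 where r13: "r13 \<in> ?H" "r13 \<in> C1" "r13 \<notin> C2" "r13 \<in> C3" using h(3) unfolding hascl_def by auto
    obtain a b c y1 y2 y3 where cr: "inI a" "inI b" "inI c" "inI y1" "inI y2" "inI y3"
      "md (a + c + y1) c2" "md (a + b + y2) c3" "md (1 * a + b + c + y3) c1"
      using core[of c2 c3 1 c1] by blast
    have d: "distinct [t, r13, r12, e2, e3, e1]" using t r12 r13 e1 e2 e3 by auto
    obtain \<alpha> where al: "\<forall>f. inI (\<alpha> f)" "\<forall>f. f \<notin> {t, r13, r12, e2, e3, e1} \<longrightarrow> \<alpha> f = 0"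
      "\<forall>C. finite C \<longrightarrow> (\<Sum>f\<in>C. \<alpha> f) = (if t \<in> C then a else 0) + (if r13 \<in> C then b else 0) +
        (if r12 \<in> C then c else 0) + (if e2 \<in> C then y1 else 0) + (if e3 \<in> C then y2 else 0) + (if e1 \<in> C then y3 else 0)"
      using assign6[OF d cr(1-6)] by blast
    have "(\<Sum>f\<in>C2. \<alpha> f) = a + c + y1" using al(3) fin(2) t r12 r13 e1 e2 e3 by simp
    moreover have "(\<Sum>f\<in>C3. \<alpha> f) = a + b + y2" using al(3) fin(3) t r12 r13 e1 e2 e3 by simp
    moreover have "(\<Sum>f\<in>C1. \<alpha> f) = 1 * a + b + c + y3" using al(3) fin(1) t r12 r13 e1 e2 e3 by simp
    moreover have "\<forall>f. f \<notin> ?H \<longrightarrow> \<alpha> f = 0" using al(2) t r12 r13 e1 e2 e3 by auto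
    ultimately show ?thesis using al(1) cr(7-9) by auto
  qed
qed


lemma prod_cis: "finite F \<Longrightarrow> (\<Prod>f\<in>F. cis (g f)) = cis (\<Sum>f\<in>F. g f)"
  by (induction F rule: finite_induct) (auto simp: cis_mult)

lemma cis_md: "md x y \<Longrightarrow> cis x = cis y"
proof -
  assume "md x y"
  then obtain k :: int where k: "x = y + 2 * pi * of_int k" unfolding md_def by blast
  have "cis x = cis y * cis (2 * pi * of_int k)" by (simp only: k cis_mult)
  also have "cis (2 * pi * of_int k) = 1" by (rule cis_multiple_2pi) simp
  finally show ?thesis by simp
qed

lemma bex3E: "\<exists>e1\<in>S. \<exists>e2\<in>S. \<exists>e3\<in>S. P e1 e2 e3 \<Longrightarrow>
   (\<And>e1 e2 e3. e1 \<in> S \<Longrightarrow> e2 \<in> S \<Longrightarrow> e3 \<in> S \<Longrightarrow> P e1 e2 e3 \<Longrightarrow> Q) \<Longrightarrow> Q"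
  by blast

context gr
begin

lemma solve_S:
  assumes S: "fundamental_coll E T S" and ed: "EDEP E T"
  shows "\<exists>\<alpha>. (\<forall>f. inI (\<alpha> f)) \<and> (\<forall>f. f \<notin> cyc_sum T S \<longrightarrow> \<alpha> f = 0) \<and>
      (\<forall>e\<in>S. md (\<Sum>f\<in>fcycle T e. \<alpha> f) (c e))"
proof -
  have SE: "S \<subseteq> E - T" using fund_sub[OF S] .
  note D = EDEP_def[THEN iffD1, OF ed, rule_format, OF S]
  have finC: "\<forall>k\<in>set ks. finite (fcycle T k)" if "set ks \<subseteq> S" for ks
    using that SE fc_facts(2) by auto
  show ?thesis
  proof (cases "K4_initiated T S")
    case False
    then have "DEP_plain T S" using D by simp
    then obtain ks where ks0: "distinct ks \<and> set ks = S \<and>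
      (\<forall>i. 1 \<le> i \<and> i < length ks \<longrightarrow> card (fcycle T (ks ! i) - cyc_sum T (set (take i ks))) > 1)"
      unfolding DEP_plain_def by (rule exE)
    have ks: "distinct ks" "set ks = S"
      "\<forall>i. 1 \<le> i \<and> i < length ks \<longrightarrow> card (fcycle T (ks ! i) - cyc_sum T (set (take i ks))) > 1"
      using ks0 by auto
    have cond: "\<forall>i<length ks. card (fcycle T (ks ! i) - ({} \<union> \<Union>(fcycle T ` set (take i ks)))) \<ge> 2"
    proof (intro allI impI)
      fix i assume i: "i < length ks"
      show "card (fcycle T (ks ! i) - ({} \<union> \<Union>(fcycle T ` set (take i ks)))) \<ge> 2"
      proof (cases "i = 0")
        case True
        have "ks ! 0 \<in> S" using i True ks(2) nth_mem by fastforce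
        then have "card (fcycle T (ks ! 0)) \<ge> 2" using fc_facts(6) SE by auto
        then show ?thesis using True by simp
      next
        case False
        then have "card (fcycle T (ks ! i) - cyc_sum T (set (take i ks))) > 1" using ks(3) i by simp
        then show ?thesis by (simp add: cyc_sum_def)
      qed
    qed
    have "\<exists>\<alpha>. (\<forall>f. inI (\<alpha> f)) \<and> (\<forall>f\<in>{}. \<alpha> f = 0) \<and>
       (\<forall>f. f \<notin> {} \<union> \<Union>(fcycle T ` set ks) \<longrightarrow> \<alpha> f = 0) \<and>
       (\<forall>k\<in>set ks. md (\<Sum>f\<in>fcycle T k. \<alpha> f) (c k))"
      by (rule seq[OF cond finC[of ks]]) (use ks(2) inI0 in auto)
    then obtain \<alpha> where al0: "(\<forall>f. inI (\<alpha> f)) \<and> (\<forall>f\<in>{}. \<alpha> f = 0) \<and>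
       (\<forall>f. f \<notin> {} \<union> \<Union>(fcycle T ` set ks) \<longrightarrow> \<alpha> f = 0) \<and>
       (\<forall>k\<in>set ks. md (\<Sum>f\<in>fcycle T k. \<alpha> f) (c k))" by (rule exE)
    have al: "\<forall>f. inI (\<alpha> f)" "\<forall>f. f \<notin> {} \<union> \<Union>(fcycle T ` set ks) \<longrightarrow> \<alpha> f = 0"
      "\<forall>k\<in>set ks. md (\<Sum>f\<in>fcycle T k. \<alpha> f) (c k)" using al0 by auto
    show ?thesis
      using al ks(2) by (intro exI[of _ \<alpha>]) (auto simp: cyc_sum_def)
  next
    case True
    then have "DEP_K4 T S" using D by simp
    then obtain e1 e2 e3 where e123: "e1 \<in> S" "e2 \<in> S" "e3 \<in> S" and rest: "distinct [e1, e2, e3] \<and>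
       K4' (fcycle T e1 \<union> fcycle T e2 \<union> fcycle T e3) \<and>
       (\<exists>ks. distinct ks \<and> set ks = S - {e1, e2, e3} \<and>
          (\<forall>i < length ks. card (fcycle T (ks ! i) -
             (fcycle T e1 \<union> fcycle T e2 \<union> fcycle T e3 \<union> cyc_sum T (set (take i ks)))) > 1))"
      unfolding DEP_K4_def by (rule bex3E)
    obtain ks where ks0: "distinct ks \<and> set ks = S - {e1, e2, e3} \<and>
          (\<forall>i < length ks. card (fcycle T (ks ! i) -
             (fcycle T e1 \<union> fcycle T e2 \<union> fcycle T e3 \<union> cyc_sum T (set (take i ks)))) > 1)"
      using conjunct2[OF conjunct2[OF rest]] by (rule exE)
    have E0: "e1 \<in> S \<and> e2 \<in> S \<and> e3 \<in> S \<and> distinct [e1, e2, e3] \<and>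
       K4' (fcycle T e1 \<union> fcycle T e2 \<union> fcycle T e3) \<and>
       distinct ks \<and> set ks = S - {e1, e2, e3} \<and>
          (\<forall>i < length ks. card (fcycle T (ks ! i) -
             (fcycle T e1 \<union> fcycle T e2 \<union> fcycle T e3 \<union> cyc_sum T (set (take i ks)))) > 1)"
      using e123 rest ks0 by simp
    have e: "e1 \<in> S" "e2 \<in> S" "e3 \<in> S" "distinct [e1, e2, e3]" using E0 by auto
    have K: "K4' (fcycle T e1 \<union> fcycle T e2 \<union> fcycle T e3)" using E0 by auto
    have ks: "distinct ks" "set ks = S - {e1, e2, e3}"
      "\<forall>i < length ks. card (fcycle T (ks ! i) -
             (fcycle T e1 \<union> fcycle T e2 \<union> fcycle T e3 \<union> cyc_sum T (set (take i ks)))) > 1"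
      using E0 by auto
    have eE: "e1 \<in> E - T" "e2 \<in> E - T" "e3 \<in> E - T" using e SE by auto
    let ?H = "fcycle T e1 \<union> fcycle T e2 \<union> fcycle T e3"
    have dg: "deg2 (fcycle T e1)" "deg2 (fcycle T e2)" "deg2 (fcycle T e3)"
      using fc_facts(7) eE unfolding deg2_def by auto
    obtain \<alpha>0 where a0: "\<forall>f. inI (\<alpha>0 f)" "\<forall>f. f \<notin> ?H \<longrightarrow> \<alpha>0 f = 0"
      "md (\<Sum>f\<in>fcycle T e1. \<alpha>0 f) (c e1)" "md (\<Sum>f\<in>fcycle T e2. \<alpha>0 f) (c e2)" "md (\<Sum>f\<in>fcycle T e3. \<alpha>0 f) (c e3)"
      using K4_solve[OF K fc_facts(2)[OF eE(1)] fc_facts(2)[OF eE(2)] fc_facts(2)[OF eE(3)] dg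
          fc_facts(3)[OF eE(1)] fc_other[OF eE(2) eE(1)] fc_other[OF eE(3) eE(1)]
          fc_other[OF eE(1) eE(2)] fc_facts(3)[OF eE(2)] fc_other[OF eE(3) eE(2)]
          fc_other[OF eE(1) eE(3)] fc_other[OF eE(2) eE(3)] fc_facts(3)[OF eE(3)], of "c e1" "c e2" "c e3"]
        e(4) by auto
    have cond: "\<forall>i<length ks. card (fcycle T (ks ! i) - (?H \<union> \<Union>(fcycle T ` set (take i ks)))) \<ge> 2"
    proof (intro allI impI)
      fix i assume i: "i < length ks"
      then have "card (fcycle T (ks ! i) - (?H \<union> cyc_sum T (set (take i ks)))) > 1" using ks(3) by simp
      then show "card (fcycle T (ks ! i) - (?H \<union> \<Union>(fcycle T ` set (take i ks)))) \<ge> 2"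
        by (simp add: cyc_sum_def)
    qed
    have ksS: "set ks \<subseteq> S" using ks(2) by auto
    obtain \<alpha> where al0: "(\<forall>f. inI (\<alpha> f)) \<and> (\<forall>f\<in>?H. \<alpha> f = \<alpha>0 f) \<and>
      (\<forall>f. f \<notin> ?H \<union> \<Union>(fcycle T ` set ks) \<longrightarrow> \<alpha> f = \<alpha>0 f) \<and>
      (\<forall>k\<in>set ks. md (\<Sum>f\<in>fcycle T k. \<alpha> f) (c k))"
      using seq[OF cond finC[OF ksS] a0(1), of c] by (rule exE)
    have al: "\<forall>f. inI (\<alpha> f)" "\<forall>f\<in>?H. \<alpha> f = \<alpha>0 f"
      "\<forall>f. f \<notin> ?H \<union> \<Union>(fcycle T ` set ks) \<longrightarrow> \<alpha> f = \<alpha>0 f"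
      "\<forall>k\<in>set ks. md (\<Sum>f\<in>fcycle T k. \<alpha> f) (c k)" using al0 by auto
    have same: "(\<Sum>f\<in>fcycle T ei. \<alpha> f) = (\<Sum>f\<in>fcycle T ei. \<alpha>0 f)" if "ei \<in> {e1, e2, e3}" for ei
      using al(2) that by (intro sum.cong) auto
    have md3: "md (\<Sum>f\<in>fcycle T e1. \<alpha> f) (c e1)" "md (\<Sum>f\<in>fcycle T e2. \<alpha> f) (c e2)"
      "md (\<Sum>f\<in>fcycle T e3. \<alpha> f) (c e3)" using same a0(3-5) by auto
    have cs: "cyc_sum T S = ?H \<union> \<Union>(fcycle T ` set ks)"
      using ks(2) e(1-3) unfolding cyc_sum_def by auto
    show ?thesis
    proof (intro exI[of _ \<alpha>] conjI)
      show "\<forall>f. inI (\<alpha> f)" using al(1) .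
      show "\<forall>f. f \<notin> cyc_sum T S \<longrightarrow> \<alpha> f = 0" using al(3) a0(2) cs by auto
      show "\<forall>e\<in>S. md (\<Sum>f\<in>fcycle T e. \<alpha> f) (c e)"
      proof
        fix e assume "e \<in> S"
        then have "e \<in> {e1, e2, e3} \<or> e \<in> set ks" using ks(2) by auto
        then show "md (\<Sum>f\<in>fcycle T e. \<alpha> f) (c e)" using md3 al(4) by auto
      qed
    qed
  qed
qed

end


context gr
begin

lemma orient_ok:
  assumes f: "f \<in> E"
  shows "\<exists>a b. orient T r f = (a, b) \<and> f = {a, b} \<and> a \<noteq> b"
proof -
  obtain x y where xy: "f = {x, y}" "x \<noteq> y" using edge_form[OF f] by auto
  define Q where "Q = (\<lambda>(s, t). f = {s, t} \<and> s \<noteq> t \<and> tree_le T r s t)"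
  have ex: "\<exists>p. Q p"
  proof (cases "tree_le T r x y")
    case True
    then have "Q (x, y)" using xy by (simp add: Q_def)
    then show ?thesis by (rule exI)
  next
    case False
    then have "tree_le T r y x" using normal[of x y] f xy by simp
    then have "Q (y, x)" using xy by (simp add: Q_def insert_commute)
    then show ?thesis by (rule exI)
  qed
  obtain s t where st: "(SOME p. Q p) = (s, t)" by (cases "SOME p. Q p") auto
  have "Q (s, t)" using someI_ex[OF ex] st by simp
  then have st2: "f = {s, t}" "s \<noteq> t" by (auto simp: Q_def)
  have "orient T r f = (if f \<in> T then (s, t) else (t, s))"
    unfolding orient_def using st unfolding Q_def by simp
  then show ?thesis using st2 by (cases "f \<in> T") (auto simp: insert_commute)
qed

lemma GNRP_ok:
  assumes ed: "EDEP E T"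
  shows "GNRP V E T r"
  unfolding GNRP_def
proof (intro allI impI)
  fix c :: "'a set \<Rightarrow> real"
  define Coll where "Coll = {S. fundamental_coll E T S}"
  define P where "P S \<alpha> \<longleftrightarrow> (\<forall>f. inI (\<alpha> f)) \<and> (\<forall>f. f \<notin> cyc_sum T S \<longrightarrow> \<alpha> f = 0) \<and>
      (\<forall>e\<in>S. md (\<Sum>f\<in>fcycle T e. \<alpha> f) (c e))" for S and \<alpha> :: "'a set \<Rightarrow> real"
  define al where "al S = (SOME \<alpha>. P S \<alpha>)" for S
  have alP: "P S (al S)" if "S \<in> Coll" for S
  proof -
    have "\<exists>\<alpha>. P S \<alpha>" using solve_S[of S c] that ed unfolding Coll_def P_def by simp
    then show ?thesis unfolding al_def by (rule someI_ex)
  qed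
  define A where "A f = (if \<exists>S\<in>Coll. f \<in> cyc_sum T S then al (SOME S. S \<in> Coll \<and> f \<in> cyc_sum T S) f else 0)" for f
  have AI: "inI (A f)" for f
  proof (cases "\<exists>S\<in>Coll. f \<in> cyc_sum T S")
    case True
    then have "\<exists>S. S \<in> Coll \<and> f \<in> cyc_sum T S" by auto
    then have "(SOME S. S \<in> Coll \<and> f \<in> cyc_sum T S) \<in> Coll" using someI_ex by (metis (mono_tags, lifting))
    then show ?thesis using alP True unfolding A_def P_def by auto
  next
    case False
    then show ?thesis unfolding A_def using inI0 by simp
  qed
  have Aeq: "A f = al S f" if S: "S \<in> Coll" "f \<in> cyc_sum T S" for S f
  proof -
    have ex: "\<exists>S. S \<in> Coll \<and> f \<in> cyc_sum T S" using S by auto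
    define S' where "S' = (SOME S. S \<in> Coll \<and> f \<in> cyc_sum T S)"
    have S': "S' \<in> Coll \<and> f \<in> cyc_sum T S'" unfolding S'_def by (rule someI_ex[OF ex])
    have "S' = S" using fund_disj[of S' S f] S S' unfolding Coll_def by simp
    moreover have "\<exists>S\<in>Coll. f \<in> cyc_sum T S" using S by auto
    ultimately show ?thesis unfolding A_def S'_def[symmetric] by simp
  qed
  have cyc: "md (\<Sum>f\<in>fcycle T e. A f) (c e)" if e: "e \<in> E - T" for e
  proof -
    obtain S where S0: "fundamental_coll E T S \<and> e \<in> S" using fund_exists[OF e] by (rule exE)
    have SC: "S \<in> Coll" using S0 by (simp add: Coll_def)
    have eS: "e \<in> S" using S0 by simp
    have sub: "fcycle T e \<subseteq> cyc_sum T S" using eS unfolding cyc_sum_def by auto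
    have "(\<Sum>f\<in>fcycle T e. A f) = (\<Sum>f\<in>fcycle T e. al S f)"
      using Aeq[OF SC] sub by (intro sum.cong) auto
    moreover have "md (\<Sum>f\<in>fcycle T e. al S f) (c e)" using alP[OF SC] eS unfolding P_def by simp
    ultimately show ?thesis by simp
  qed
  define \<phi> where "\<phi> s t = (if orient T r {s, t} = (s, t) then cis (A {s, t}) else cis (- A {s, t}))" for s t
  show "\<exists>\<phi>. gain_fun E \<phi> \<and>
             (\<forall>e\<in>E - T. cycle_gain T r \<phi> e = exp (\<i> * complex_of_real (c e))) \<and>
             (\<forall>s\<in>V. \<forall>t\<in>V. 0 \<le> Re (gain_adj E \<phi> s t))"
  proof (intro exI[of _ \<phi>] conjI ballI)
    show "gain_fun E \<phi>"
      unfolding gain_fun_def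
    proof (intro allI impI conjI)
      fix s t assume st: "{s, t} \<in> E"
      show "cmod (\<phi> s t) = 1" by (simp add: \<phi>_def)
      obtain a b where ab: "orient T r {s, t} = (a, b)" "{s, t} = {a, b}" "a \<noteq> b" using orient_ok[OF st] by auto
      have ts: "{t, s} = {s, t}" by (simp add: insert_commute)
      have "s \<noteq> t" using ab by auto
      then consider "(a, b) = (s, t)" | "(a, b) = (t, s)" using ab(2) by (auto simp: doubleton_eq_iff)
      then show "\<phi> t s = inverse (\<phi> s t)"
      proof cases
        case 1
        then show ?thesis using ab(1) \<open>s \<noteq> t\<close> by (simp add: \<phi>_def ts)
      next
        case 2
        then show ?thesis using ab(1) \<open>s \<noteq> t\<close> by (simp add: \<phi>_def ts)
      qed
    qed
  next
    fix e assume e: "e \<in> E - T"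
    have "(\<Prod>f\<in>fcycle T e. case orient T r f of (a, b) \<Rightarrow> \<phi> a b) = (\<Prod>f\<in>fcycle T e. cis (A f))"
    proof (rule prod.cong)
      fix f assume f: "f \<in> fcycle T e"
      have "f \<in> E" using f fc_facts(1)[OF e] by auto
      then obtain a b where ab: "orient T r f = (a, b)" "f = {a, b}" "a \<noteq> b" using orient_ok by blast
      show "(case orient T r f of (a, b) \<Rightarrow> \<phi> a b) = cis (A f)"
        using ab by (simp add: \<phi>_def)
    qed simp
    also have "\<dots> = cis (\<Sum>f\<in>fcycle T e. A f)" by (rule prod_cis[OF fc_facts(2)[OF e]])
    also have "\<dots> = cis (c e)" by (rule cis_md[OF cyc[OF e]])
    also have "\<dots> = exp (\<i> * complex_of_real (c e))" by (rule cis_conv_exp)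
    finally show "cycle_gain T r \<phi> e = exp (\<i> * complex_of_real (c e))" unfolding cycle_gain_def .
  next
    fix s t assume "s \<in> V" "t \<in> V"
    have "0 \<le> cos (A {s, t})" "0 \<le> cos (- A {s, t})"
      using AI[of "{s, t}"] unfolding inI_def by (auto intro!: cos_ge_zero)
    then show "0 \<le> Re (gain_adj E \<phi> s t)" by (simp add: gain_adj_def \<phi>_def)
  qed
qed

end

theorem theorem4p4:
  fixes V :: "'a set" and E :: "'a set set" and T :: "'a set set" and r :: 'a
  assumes "simple_graph V E"
    and "connected_graph V E"
    and "normal_spanning_tree V E T r"
    and "EDEP E T"
  shows "GNRP V E T r"
proof -
  interpret gr V E T r using assms(1,3) by unfold_locales
  show ?thesis using GNRP_ok[OF assms(4)] .
qed


end
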